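(* Let $r>1$ be real. If $L_r\le 3$, then $C_r\le 5$.
   Context: $p_m$ denotes the $m$-th prime. For $n\in\mathbb{N}$, $\sigma_{-r}(n)=\sum_{d\mid n}d^{-r}$; $C_r$ is the number of connected components of the closure $\overline{\sigma_{-r}(\mathbb{N})}\subseteq\mathbb{R}$. Let $u_m(r)=\prod_{t=m+1}^\infty\frac1{1-p_t^{-r}}$; a prime $p_m$ is $r$-mighty if $1+p_m^{-r}>u_m(r)$. $L_r$ denotes the index of the largest $r$-mighty prime (so $p_{L_r}$ is $r$-mighty and no $p_m$ with $m>L_r$ is), with $L_r=0$ if there are no $r$-mighty primes. *)

theory Defs
  imports "HOL-Analysis.Analysis" "HOL-Computational_Algebra.Primes" "HOL-Library.Infinite_Set"
begin

text \<open>p m is the m-th prime, 1-indexed: p 1 = 2, p 2 = 3, ...\<close>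
definition nth_prime1 :: "nat \<Rightarrow> nat" where
  "nth_prime1 m = enumerate {q::nat. prime q} (m - 1)"

definition sigma_neg :: "real \<Rightarrow> nat \<Rightarrow> real" where
  "sigma_neg r n = (\<Sum>d\<in>{d. d dvd n}. real d powr (- r))"

definition u_tail :: "nat \<Rightarrow> real \<Rightarrow> real" where
  "u_tail m r = (\<Prod>k. 1 / (1 - real (nth_prime1 (m + 1 + k)) powr (- r)))"

definition mighty :: "real \<Rightarrow> nat \<Rightarrow> bool" where
  "mighty r m \<longleftrightarrow> m \<ge> 1 \<and> 1 + real (nth_prime1 m) powr (- r) > u_tail m r"

text \<open>C_r: number of connected components of the closure of sigma_{-r}(N)\<close>
definition sigma_closure :: "real \<Rightarrow> real set" where
  "sigma_closure r = closure (sigma_neg r ` {n. n \<ge> 1})"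

end

theory Submission
  imports Defs
begin

lemma primes_infinite': "infinite {q::nat. prime q}"
  using primes_infinite by (simp add: Collect_mem_eq) 

lemma P_prime: "prime (nth_prime1 k)"
  unfolding nth_prime1_def using enumerate_in_set[OF primes_infinite'] by blast

lemma P_mono: "1 \<le> j \<Longrightarrow> j < k \<Longrightarrow> nth_prime1 j < nth_prime1 k"
  unfolding nth_prime1_def using enumerate_mono[OF _ primes_infinite'] by simp

lemma P_inj: "1 \<le> j \<Longrightarrow> 1 \<le> k \<Longrightarrow> nth_prime1 j = nth_prime1 k \<Longrightarrow> j = k"
  by (metis P_mono less_irrefl linorder_neq_iff)

lemma P_surj: "prime (q::nat) \<Longrightarrow> \<exists>k\<ge>1. nth_prime1 k = q"
proof -
  assume q: "prime q"
  obtain n where "enumerate {q::nat. prime q} n = q"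
    using enumerate_Ex[OF primes_infinite'] q by blast
  then show ?thesis unfolding nth_prime1_def by (intro exI[of _ "Suc n"]) auto
qed

lemma P_Suc: "nth_prime1 (Suc (Suc n)) = (LEAST s. prime s \<and> nth_prime1 (Suc n) < s)"
  unfolding nth_prime1_def using enumerate_Suc''[OF primes_infinite', of n] by simp

lemma P1: "nth_prime1 1 = 2"
  unfolding nth_prime1_def 
  apply (simp add: enumerate_0)
  by (rule Least_equality) (auto simp: prime_ge_2_nat)

lemma P2: "nth_prime1 2 = 3"
  using P_Suc[of 0] P1 
  by (simp add: numeral_2_eq_2) (rule Least_equality, auto)

lemma not_prime_4: "\<not> prime (4::nat)" 
  using prime_product[of 2 2] by simp
lemma not_prime_6: "\<not> prime (6::nat)" 
  using prime_product[of 2 3] by simp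
lemma not_prime_8: "\<not> prime (8::nat)" 
  using prime_product[of 2 4] by simp
lemma not_prime_9: "\<not> prime (9::nat)" 
  using prime_product[of 3 3] by simp
lemma not_prime_10: "\<not> prime (10::nat)" 
  using prime_product[of 2 5] by simp

lemma P3: "nth_prime1 3 = 5"
proof -
  have "nth_prime1 3 = (LEAST s. prime s \<and> 3 < s)"
    using P_Suc[of 1] P2 by (simp add: eval_nat_numeral)
  also have "\<dots> = 5"
  proof (rule Least_equality)
    show "prime (5::nat) \<and> 3 < (5::nat)" by simp
    fix y :: nat assume "prime y \<and> 3 < y"
    then show "5 \<le> y" using not_prime_4 by (cases "y = 4") auto
  qed
  finally show ?thesis .
qed

lemma P4: "nth_prime1 4 = 7"
proof -
  have "nth_prime1 4 = (LEAST s. prime s \<and> 5 < s)"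
    using P_Suc[of 2] P3 by (simp add: eval_nat_numeral)
  also have "\<dots> = 7"
  proof (rule Least_equality)
    show "prime (7::nat) \<and> 5 < (7::nat)" by simp
    fix y :: nat assume "prime y \<and> 5 < y"
    then show "7 \<le> y" using not_prime_6 by (cases "y = 6") auto
  qed
  finally show ?thesis .
qed

lemma P5: "nth_prime1 5 = 11"
proof -
  have "nth_prime1 5 = (LEAST s. prime s \<and> 7 < s)"
    using P_Suc[of 3] P4 by (simp add: eval_nat_numeral)
  also have "\<dots> = 11"
  proof (rule Least_equality)
    show "prime (11::nat) \<and> 7 < (11::nat)" by simp
    fix y :: nat assume "prime y \<and> 7 < y"
    then show "11 \<le> y" using not_prime_8 not_prime_9 not_prime_10 
      by (cases "y = 8"; cases "y = 9"; cases "y = 10") auto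
  qed
  finally show ?thesis .
qed

lemma P_ge: "1 \<le> k \<Longrightarrow> k + 1 \<le> nth_prime1 k"
proof (induction k rule: dec_induct[of 1])
  case base then show ?case using P1 by simp
next
  case (step n)
  then show ?case using P_mono[of n "Suc n"] by simp
qed

lemma P_ge11: "5 \<le> k \<Longrightarrow> 11 \<le> nth_prime1 k"
  using P5 P_mono[of 5 k] by (cases "k = 5") auto

lemma P_ge7: "4 \<le> k \<Longrightarrow> 7 \<le> nth_prime1 k"
  using P4 P_mono[of 4 k] by (cases "k = 4") auto

definition sp :: "real \<Rightarrow> nat \<Rightarrow> nat \<Rightarrow> real" where
  "sp r p e = (\<Sum>i\<le>e. (real p powr (-r)) ^ i)"

lemma sigma_one: "sigma_neg r 1 = 1"
  unfolding sigma_neg_def by simp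

lemma sigma_mult:
  assumes cop: "coprime a b" and a: "a > 0" and b: "b > 0"
  shows "sigma_neg r (a*b) = sigma_neg r a * sigma_neg r b"
proof -
  let ?h = "\<lambda>(d1,d2). d1*d2::nat"
  let ?f = "\<lambda>d::nat. real d powr (-r)"
  have fa: "finite {d. d dvd a}" using a by (simp add: finite_divisors_nat)
  have fb: "finite {d. d dvd b}" using b by (simp add: finite_divisors_nat)
  have inj: "inj_on ?h ({d. d dvd a} \<times> {d. d dvd b})"
  proof (rule inj_onI, clarsimp)
    fix d1 d2 e1 e2 :: nat
    assume h: "d1 dvd a" "d2 dvd b" "e1 dvd a" "e2 dvd b" "d1*d2 = e1*e2"
    have c1: "coprime d1 e2" using cop h(1) h(4) coprime_imp_coprime by (meson coprime_divisors)
    have c2: "coprime e1 d2" using cop h(3) h(2) by (meson coprime_divisors)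
    have "d1 dvd e1*e2" using h(5) by (metis dvd_triv_left)
    then have "d1 dvd e1" using c1 coprime_dvd_mult_left_iff by blast
    moreover have "e1 dvd d1*d2" using h(5) by (metis dvd_triv_left)
    then have "e1 dvd d1" using c2 coprime_dvd_mult_left_iff by blast
    ultimately have "d1 = e1" by (simp add: dvd_antisym)
    moreover have "d1 > 0" using h(1) a by (metis dvd_0_left_iff gr0I less_not_refl)
    ultimately show "d1 = e1 \<and> d2 = e2" using h(5) by simp
  qed
  have img: "?h ` ({d. d dvd a} \<times> {d. d dvd b}) = {d. d dvd a*b}"
  proof
    show "?h ` ({d. d dvd a} \<times> {d. d dvd b}) \<subseteq> {d. d dvd a*b}"
      by (auto intro: mult_dvd_mono)
    show "{d. d dvd a*b} \<subseteq> ?h ` ({d. d dvd a} \<times> {d. d dvd b})"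
    proof
      fix d assume "d \<in> {d. d dvd a*b}"
      then obtain d1 d2 where "d = d1*d2" "d1 dvd a" "d2 dvd b"
        using division_decomp by blast
      then show "d \<in> ?h ` ({d. d dvd a} \<times> {d. d dvd b})" by force
    qed
  qed
  have "sigma_neg r (a*b) = (\<Sum>d\<in>?h ` ({d. d dvd a} \<times> {d. d dvd b}). ?f d)"
    unfolding sigma_neg_def img ..
  also have "\<dots> = (\<Sum>x\<in>{d. d dvd a} \<times> {d. d dvd b}. ?f (?h x))"
    by (rule sum.reindex[OF inj, unfolded comp_def])
  also have "\<dots> = (\<Sum>(d1,d2)\<in>{d. d dvd a} \<times> {d. d dvd b}. ?f d1 * ?f d2)"
    by (rule sum.cong) (auto simp: powr_mult)
  also have "\<dots> = (\<Sum>d1\<in>{d. d dvd a}. \<Sum>d2\<in>{d. d dvd b}. ?f d1 * ?f d2)"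
    by (rule sum.cartesian_product[symmetric])
  also have "\<dots> = sigma_neg r a * sigma_neg r b"
    unfolding sigma_neg_def by (simp add: sum_product)
  finally show ?thesis .
qed

lemma sigma_pp:
  assumes p: "prime p"
  shows "sigma_neg r (p^e) = sp r p e"
proof -
  have inj: "inj_on (\<lambda>i. p^i) {..e}"
    using p prime_gt_1_nat[OF p] by (auto intro!: inj_onI simp: power_inject_exp)
  have img: "{d. d dvd p^e} = (\<lambda>i. p^i) ` {..e}"
    using divides_primepow_nat[OF p] by auto
  have "sigma_neg r (p^e) = (\<Sum>i\<le>e. real (p^i) powr (-r))"
    unfolding sigma_neg_def img by (rule sum.reindex[OF inj, unfolded comp_def])
  also have "\<dots> = sp r p e"
    unfolding sp_def
    by (rule sum.cong) (auto simp: powr_realpow[symmetric] powr_powr mult.commute p prime_gt_0_nat)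
  finally show ?thesis .
qed

definition geo :: "real \<Rightarrow> nat \<Rightarrow> real" where
  "geo x e = (\<Sum>i\<le>e. x ^ i)"

lemma sp_geo: "sp r p e = geo (real p powr (-r)) e"
  unfolding sp_def geo_def ..

lemma geo_0[simp]: "geo x 0 = 1" unfolding geo_def by simp
lemma geo_Suc: "geo x (Suc e) = geo x e + x ^ Suc e" unfolding geo_def by simp
lemma geo_1: "geo x 1 = 1 + x" unfolding geo_def by simp
lemma geo_2: "geo x 2 = 1 + x + x^2" unfolding geo_def by (simp add: eval_nat_numeral)

lemma geo_mono_Suc: "0 \<le> x \<Longrightarrow> geo x e \<le> geo x (Suc e)"
  by (simp add: geo_Suc)

lemma geo_ge1: "0 \<le> x \<Longrightarrow> 1 \<le> geo x e"
  by (induction e) (auto intro: order_trans geo_mono_Suc)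

lemma geo_mono: assumes "0 \<le> x" "d \<le> e" shows "geo x d \<le> geo x e"
  using assms(2) by (induction e rule: dec_induct) (auto intro: order_trans geo_mono_Suc[OF assms(1)])

lemma geo_closed: "x \<noteq> 1 \<Longrightarrow> geo x e = (1 - x ^ Suc e) / (1 - x)"
  unfolding geo_def using sum_gp_strict[of x "Suc e"] lessThan_Suc_atMost by simp

lemma geo_lt: "0 < x \<Longrightarrow> x < 1 \<Longrightarrow> geo x e < 1 / (1 - x)"
proof -
  assume x: "0 < x" "x < 1"
  have "0 < x ^ Suc e" using x by simp
  then have "1 - x ^ Suc e < 1" by simp
  then show ?thesis using geo_closed[of x e] x by (simp add: divide_strict_right_mono)
qed

lemma geo_le: "0 \<le> x \<Longrightarrow> x < 1 \<Longrightarrow> geo x e \<le> 1 / (1 - x)"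
proof -
  assume x: "0 \<le> x" "x < 1"
  have "0 \<le> x ^ Suc e" using x by simp
  then have "1 - x ^ Suc e \<le> 1" by simp
  then show ?thesis using geo_closed[of x e] x by (simp add: divide_right_mono)
qed

lemma geo_lim: "0 \<le> x \<Longrightarrow> x < 1 \<Longrightarrow> (\<lambda>e. geo x e) \<longlonglongrightarrow> 1 / (1 - x)"
proof -
  assume x: "0 \<le> x" "x < 1"
  have "(\<lambda>e. (1 - x ^ Suc e) / (1 - x)) \<longlonglongrightarrow> (1 - 0) / (1 - x)"
    by (intro tendsto_intros LIMSEQ_Suc LIMSEQ_power_zero) (use x in auto)
  then show ?thesis using geo_closed[of x] x by simp
qed

lemma geo_ratio: "0 \<le> x \<Longrightarrow> geo x (Suc e) \<le> geo x e * (1 + x ^ Suc e)"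
proof -
  assume x: "0 \<le> x"
  have "1 * x ^ Suc e \<le> geo x e * x ^ Suc e" using geo_ge1[OF x, of e] x
    by (intro mult_right_mono) auto
  then show ?thesis by (simp add: geo_Suc algebra_simps)
qed

lemma geo_ratio1: "0 \<le> x \<Longrightarrow> x \<le> 1 \<Longrightarrow> geo x (Suc e) \<le> geo x e * (1 + x)"
proof -
  assume x: "0 \<le> x" "x \<le> 1"
  have "x ^ Suc e \<le> x" using x by (simp add: power_le_one mult_left_le)
  then have "geo x e * (1 + x ^ Suc e) \<le> geo x e * (1 + x)"
    using geo_ge1[OF x(1), of e] by (intro mult_left_mono) auto
  then show ?thesis using geo_ratio[OF x(1), of e] by simp
qed

lemma geo_ratio_k: "0 \<le> x \<Longrightarrow> x \<le> 1 \<Longrightarrow> k \<le> Suc e \<Longrightarrow> geo x (Suc e) \<le> geo x e * (1 + x ^ k)"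
proof -
  assume x: "0 \<le> x" "x \<le> 1" and k: "k \<le> Suc e"
  have "x ^ Suc e \<le> x ^ k" using power_decreasing[OF k x(1) x(2)] .
  then have "geo x e * (1 + x ^ Suc e) \<le> geo x e * (1 + x ^ k)"
    using geo_ge1[OF x(1), of e] by (intro mult_left_mono) auto
  then show ?thesis using geo_ratio[OF x(1), of e] by simp
qed

definition aa :: "real \<Rightarrow> nat \<Rightarrow> real" where
  "aa r k = real (nth_prime1 k) powr (-r)"
definition fp :: "real \<Rightarrow> nat \<Rightarrow> real" where
  "fp r k = 1 / (1 - aa r k)"

lemma u_tail_fp: "u_tail m r = (\<Prod>k. fp r (m + 1 + k))"
  unfolding u_tail_def fp_def aa_def ..

lemma aa_pos: "0 < aa r k"
  unfolding aa_def using prime_gt_0_nat[OF P_prime[of k]] by simp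

lemma aa_lt_half: "r > 1 \<Longrightarrow> aa r k < 1/2"
proof -
  assume r: "r > 1"
  have p2: "2 \<le> real (nth_prime1 k)" using prime_ge_2_nat[OF P_prime[of k]] by linarith
  have "aa r k \<le> 2 powr (-r)" unfolding aa_def
    using p2 r by (intro powr_mono2') auto
  also have "\<dots> < 2 powr (-1)" using r by (intro powr_less_mono) auto
  finally show ?thesis by (simp add: powr_minus_divide)
qed

lemma aa_lt1: "r > 1 \<Longrightarrow> aa r k < 1"
  using aa_lt_half[of r k] by simp

lemma fp_ge1: "r > 1 \<Longrightarrow> 1 \<le> fp r k"
  unfolding fp_def using aa_pos[of r k] aa_lt1[of r k] by simp

lemma fp_gt1: "r > 1 \<Longrightarrow> 1 < fp r k"
  unfolding fp_def using aa_pos[of r k] aa_lt1[of r k] by simp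

lemma fp_pos: "r > 1 \<Longrightarrow> 0 < fp r k"
  using fp_ge1[of r k] by simp

lemma fp_nonneg: "r > 1 \<Longrightarrow> 0 \<le> fp r k"
  using fp_ge1[of r k] by simp

lemma fp_ne0: "r > 1 \<Longrightarrow> fp r k \<noteq> 0"
  using fp_ge1[of r k] by simp

lemma aa_le_powr: "r > 1 \<Longrightarrow> aa r (m + 1 + k) \<le> real (Suc k) powr (-r)"
proof -
  assume r: "r > 1"
  have "real (Suc k) \<le> real (nth_prime1 (m + 1 + k))"
    using P_ge[of "m+1+k"] by simp
  then show ?thesis unfolding aa_def using r by (intro powr_mono2') auto
qed

lemma conv_tail: 
  assumes r: "r > 1"
  shows "convergent_prod (\<lambda>k. fp r (m + 1 + k))"
proof -
  define b where "b k = aa r (m+1+k) / (1 - aa r (m+1+k))" for k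
  have bpos: "b k > 0" for k unfolding b_def using aa_pos[of r] aa_lt1[OF r] by simp
  have fpb: "fp r (m+1+k) = 1 + b k" for k
    unfolding b_def fp_def using aa_lt1[OF r, of "m+1+k"] by (simp add: field_simps)
  have s1: "summable (\<lambda>k. real k powr (-r))"
    using summable_real_powr_iff[of "-r"] r by simp
  then have s2: "summable (\<lambda>k. 2 * real (Suc k) powr (-r))"
    by (subst summable_Suc_iff) (rule summable_mult)
  have "summable b"
  proof (rule summable_comparison_test'[OF s2])
    fix k :: nat
    have a: "aa r (m+1+k) < 1/2" using aa_lt_half[OF r] .
    have "b k \<le> 2 * aa r (m+1+k)"
      unfolding b_def using a aa_pos[of r "m+1+k"] by (simp add: field_simps)
    also have "\<dots> \<le> 2 * real (Suc k) powr (-r)" using aa_le_powr[OF r] by simp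
    finally show "norm (b k) \<le> 2 * real (Suc k) powr (-r)" using bpos[of k] by simp
  qed
  then have "convergent_prod (\<lambda>k. 1 + b k)"
    using convergent_prod_iff_summable_real[of b] bpos by simp
  then show ?thesis using fpb by simp
qed

lemma u_split:
  assumes r: "r > 1"
  shows "u_tail m r = fp r (m + 1) * u_tail (Suc m) r"
proof -
  have "u_tail (Suc m) r = (\<Prod>n. fp r (m + 1 + Suc n))"
    unfolding u_tail_fp by simp
  also have "\<dots> = u_tail m r / fp r (m + 1 + 0)"
    unfolding u_tail_fp
    by (rule prodinf_split_head[of "\<lambda>k. fp r (m+1+k)", OF conv_tail[OF r]])
       (use fp_ne0[OF r] in auto)
  finally show ?thesis using fp_pos[OF r, of "m+1"] by (simp add: field_simps)
qed

lemma u_ge1: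
  assumes r: "r > 1"
  shows "1 \<le> u_tail m r"
proof -
  have "prod (\<lambda>k. fp r (m+1+k)) {..<0} \<le> (\<Prod>k. fp r (m + 1 + k))"
    by (rule prod_le_prodinf) (use conv_tail[OF r] fp_ge1[OF r] fp_nonneg[OF r] in auto)
  then show ?thesis unfolding u_tail_fp by simp
qed

lemma prod_ge1_subset:
  fixes f :: "nat \<Rightarrow> real"
  assumes "finite B" "K \<subseteq> B" "\<And>k. k \<in> B \<Longrightarrow> 1 \<le> f k"
  shows "prod f K \<le> prod f B"
proof -
  have "prod f B = prod f (B - K) * prod f K"
    using prod.subset_diff[OF assms(2,1)] by simp
  moreover have "1 \<le> prod f (B - K)" using assms(3) by (intro prod_ge_1) auto
  moreover have "0 \<le> prod f K"
  proof (rule prod_nonneg)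
    fix k assume "k \<in> K"
    then have "1 \<le> f k" using assms(2,3) by blast
    then show "0 \<le> f k" by linarith
  qed
  ultimately show ?thesis by (simp add: mult_le_cancel_right1)
qed

lemma u_fin:
  assumes r: "r > 1" and K: "finite K" "\<And>k. k \<in> K \<Longrightarrow> m < k"
  shows "prod (fp r) K \<le> u_tail m r"
proof -
  obtain n0 where n0: "K \<subseteq> {..<n0}" using finite_nat_bounded[OF K(1)] by blast
  define n where "n = n0"
  have n: "\<And>k. k \<in> K \<Longrightarrow> k < m + 1 + n" using n0 unfolding n_def by auto
  have "K \<subseteq> (\<lambda>i. m + 1 + i) ` {..<n}"
  proof
    fix k assume "k \<in> K"
    then have "k = m + 1 + (k - m - 1)" "k - m - 1 < n" using K(2) n by force+
    then show "k \<in> (\<lambda>i. m + 1 + i) ` {..<n}" by blast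
  qed
  then have "prod (fp r) K \<le> prod (fp r) ((\<lambda>i. m + 1 + i) ` {..<n})"
    by (intro prod_ge1_subset) (auto intro: fp_ge1[OF r])
  also have "\<dots> = (\<Prod>i<n. fp r (m + 1 + i))"
    by (subst prod.reindex) (auto simp: inj_on_def)
  also have "\<dots> \<le> (\<Prod>k. fp r (m + 1 + k))"
    by (rule prod_le_prodinf) (use conv_tail[OF r] fp_ge1[OF r] fp_nonneg[OF r] in auto)
  finally show ?thesis unfolding u_tail_fp .
qed

lemma u_lim:
  assumes r: "r > 1"
  shows "(\<lambda>m. u_tail m r) \<longlonglongrightarrow> 1"
proof -
  define g where "g i = fp r (0 + 1 + i)" for i
  have cg: "convergent_prod g" unfolding g_def by (rule conv_tail[OF r])
  have gpos: "g i \<noteq> 0" for i unfolding g_def using fp_ne0[OF r] .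
  have split: "u_tail 0 r = u_tail m r * (\<Prod>i<m. g i)" for m
  proof -
    have "u_tail 0 r = prodinf g" unfolding u_tail_fp g_def ..
    also have "\<dots> = (\<Prod>i. g (i + m)) * (\<Prod>i<m. g i)"
      by (rule prodinf_split_initial_segment[OF cg]) (use gpos in auto)
    also have "(\<Prod>i. g (i + m)) = u_tail m r" unfolding u_tail_fp g_def
      by (simp add: add.commute add.left_commute)
    finally show ?thesis .
  qed
  have "g has_prod prodinf g" using convergent_prod_has_prod[OF cg] .
  then have lim0: "(\<lambda>m. \<Prod>i<m. g i) \<longlonglongrightarrow> prodinf g" by (rule has_prod_imp_tendsto')
  have "prodinf g = u_tail 0 r" unfolding u_tail_fp g_def ..
  with lim0 have lim: "(\<lambda>m. \<Prod>i<m. g i) \<longlonglongrightarrow> u_tail 0 r" by simp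
  have ppos: "(\<Prod>i<m. g i) > 0" for m unfolding g_def using fp_pos[OF r] by (intro prod_pos) auto
  have eq: "u_tail m r = u_tail 0 r / (\<Prod>i<m. g i)" for m
  proof -
    have "u_tail 0 r / (\<Prod>i<m. g i) = u_tail m r * (\<Prod>i<m. g i) / (\<Prod>i<m. g i)"
      using split[of m] by simp
    also have "\<dots> = u_tail m r"
    proof -
      have ne: "(\<Prod>i<m. g i) \<noteq> 0" using ppos[of m] by linarith
      show ?thesis by (rule nonzero_mult_div_cancel_right[OF ne])
    qed
    finally show ?thesis by simp
  qed
  have "(\<lambda>m. u_tail 0 r / (\<Prod>i<m. g i)) \<longlonglongrightarrow> u_tail 0 r / u_tail 0 r"
    by (intro tendsto_intros lim) (use u_ge1[OF r, of 0] in auto)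
  moreover have "u_tail 0 r / u_tail 0 r = 1" using u_ge1[OF r, of 0] by simp
  moreover have "(\<lambda>m. u_tail m r) = (\<lambda>m. u_tail 0 r / (\<Prod>i<m. g i))"
    by (rule ext) (rule eq)
  ultimately show ?thesis by metis
qed

lemma decomp_p:
  fixes p n :: nat
  assumes p: "prime p" and n: "n > 0"
  obtains e m where "n = p^e * m" "\<not> p dvd m" "m > 0"
proof -
  have "\<not> is_unit p" using p by (metis not_prime_unit)
  from multiplicity_decompose'[OF _ this, of n] n obtain y where
    "n = p ^ multiplicity p n * y" "\<not> p dvd y" by auto
  moreover then have "y > 0" using n by (metis gr0I mult_0_right)
  ultimately show ?thesis using that by blast
qed

lemma sigma_pos: "n > 0 \<Longrightarrow> sigma_neg r n \<ge> 1"
proof -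
  assume n: "n > 0"
  have fin: "finite {d. d dvd n}" using n by (simp add: finite_divisors_nat)
  have "sigma_neg r n = real 1 powr (-r) + (\<Sum>d\<in>{d. d dvd n} - {1}. real d powr (-r))"
    unfolding sigma_neg_def using fin by (subst sum.remove[of _ 1]) auto
  moreover have "0 \<le> (\<Sum>d\<in>{d. d dvd n} - {1}. real d powr (-r))" by (intro sum_nonneg) auto
  ultimately show ?thesis by simp
qed

definition KK :: "nat \<Rightarrow> nat set" where
  "KK m = {k. 1 \<le> k \<and> nth_prime1 k dvd m}"

lemma KK_finite: "m > 0 \<Longrightarrow> finite (KK m)"
proof -
  assume m: "m > 0"
  have "KK m \<subseteq> {..m}"
  proof
    fix k assume "k \<in> KK m"
    then have "1 \<le> k" "nth_prime1 k dvd m" unfolding KK_def by auto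
    then have "k + 1 \<le> nth_prime1 k" "nth_prime1 k \<le> m" using P_ge m by (auto intro: dvd_imp_le)
    then show "k \<in> {..m}" by simp
  qed
  then show ?thesis by (rule finite_subset) simp
qed

lemma sigma_le_prodKK:
  assumes r: "r > 1"
  shows "m > 0 \<Longrightarrow> sigma_neg r m \<le> prod (fp r) (KK m)"
proof (induction m rule: less_induct)
  case (less m)
  show ?case
  proof (cases "m = 1")
    case True
    have "KK m = {}"
    proof -
      have "k \<notin> KK m" for k
      proof
        assume "k \<in> KK m"
        then have "nth_prime1 k dvd 1" unfolding KK_def True by simp
        then have "nth_prime1 k = 1" by simp
        then show False using prime_gt_1_nat[OF P_prime[of k]] by simp
      qed
      then show ?thesis by blast
    qed
    then show ?thesis using True sigma_one by simp
  next
    case False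
    obtain q where q: "prime q" "q dvd m" using prime_factor_nat[OF False] by blast
    obtain j where j: "j \<ge> 1" "nth_prime1 j = q" using P_surj[OF q(1)] by blast
    obtain e m' where em: "m = q^e * m'" "\<not> q dvd m'" "m' > 0" using decomp_p[OF q(1) less.prems] by blast
    have e: "e > 0" using em q(2) by (metis dvd_mult_left mult_1 power_0 gr0I)
    have m'lt: "m' < m"
    proof -
      have "q^e \<ge> q^1" using e prime_ge_2_nat[OF q(1)] by (intro power_increasing) auto
      then have "q^e \<ge> 2" using prime_ge_2_nat[OF q(1)] by simp
      then show ?thesis using em by (simp add: less_le_trans)
    qed
    have cop: "coprime (q^e) m'" using em(2) q(1) by (simp add: prime_imp_coprime)
    have sig: "sigma_neg r m = sp r q e * sigma_neg r m'"
      using sigma_mult[OF cop] sigma_pp[OF q(1)] em e q(1) by (simp add: prime_gt_0_nat)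
    have spq: "sp r q e \<le> fp r j"
      unfolding sp_geo fp_def aa_def j(2)[symmetric]
      using aa_pos[of r j] aa_lt1[OF r, of j] unfolding aa_def by (intro geo_le) auto
    have KKeq: "KK m = insert j (KK m')"
    proof
      show "KK m \<subseteq> insert j (KK m')"
      proof
        fix k assume k: "k \<in> KK m"
        then have k1: "1 \<le> k" "nth_prime1 k dvd q^e * m'" unfolding KK_def em(1)[symmetric] by auto
        show "k \<in> insert j (KK m')"
        proof (cases "nth_prime1 k dvd m'")
          case True then show ?thesis using k1 unfolding KK_def by auto
        next
          case False
          then have "nth_prime1 k dvd q^e" using k1 P_prime[of k] prime_dvd_mult_iff by blast
          then have "nth_prime1 k dvd q" using P_prime[of k] prime_dvd_power by blast
          then have "nth_prime1 k = q" using P_prime[of k] q(1) primes_dvd_imp_eq by blast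
          then have "k = j" using P_inj[OF k1(1) j(1)] j(2) by simp
          then show ?thesis by simp
        qed
      qed
      show "insert j (KK m') \<subseteq> KK m"
        unfolding KK_def using j q(2) em(1) by auto
    qed
    have jn: "j \<notin> KK m'" unfolding KK_def using j em(2) by auto
    have "sigma_neg r m' \<le> prod (fp r) (KK m')" using less.IH[OF m'lt em(3)] .
    have "sigma_neg r m = sp r q e * sigma_neg r m'" by (fact sig)
    also have "\<dots> \<le> fp r j * prod (fp r) (KK m')"
      using spq less.IH[OF m'lt em(3)] sigma_pos[OF em(3), of r] fp_nonneg[OF r]
      by (intro mult_mono) auto
    also have "\<dots> = prod (fp r) (KK m)"
      unfolding KKeq using jn KK_finite[OF em(3)] by simp
    finally show ?thesis .
  qed
qed

lemma sigma_le_U3: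
  assumes r: "r > 1" and m: "m > 0" and m2: "\<not> 2 dvd m" and m3: "\<not> 3 dvd m" and m5: "\<not> 5 dvd m"
  shows "sigma_neg r m \<le> u_tail 3 r"
proof -
  have "\<And>k. k \<in> KK m \<Longrightarrow> 3 < k"
  proof -
    fix k assume "k \<in> KK m"
    then have k: "1 \<le> k" "nth_prime1 k dvd m" unfolding KK_def by auto
    show "3 < k"
    proof (rule ccontr)
      assume "\<not> 3 < k"
      then have "k = 1 \<or> k = 2 \<or> k = 3" using k(1) by auto
      then show False using k(2) m2 m3 m5 P1 P2 P3 by auto
    qed
  qed
  then have "prod (fp r) (KK m) \<le> u_tail 3 r" using u_fin[OF r KK_finite[OF m]] by blast
  then show ?thesis using sigma_le_prodKK[OF r m] by simp
qed

lemma nonmighty_le: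
  assumes "\<forall>m > 3. \<not> mighty r m" "k \<ge> 4"
  shows "1 + aa r k \<le> u_tail k r"
proof -
  have "3 < k" using assms(2) by simp
  then have "\<not> mighty r k" using assms(1) by blast
  then show ?thesis unfolding mighty_def aa_def using assms(2) by simp
qed

lemma dens_step:
  assumes r: "r > 1" and nm: "\<forall>m > 3. \<not> mighty r m"
    and t: "1 \<le> t" "t < u_tail 3 r"
  shows "\<exists>m. m > 0 \<and> (\<forall>k. 1 \<le> k \<longrightarrow> nth_prime1 k dvd m \<longrightarrow> 4 \<le> k \<and> k \<le> 3 + i)
           \<and> sigma_neg r m \<le> t \<and> t < sigma_neg r m * u_tail (3 + i) r"
proof (induction i)
  case 0
  have "\<forall>k. 1 \<le> k \<longrightarrow> nth_prime1 k dvd 1 \<longrightarrow> 4 \<le> k \<and> k \<le> 3"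
  proof (intro allI impI)
    fix k :: nat assume "nth_prime1 k dvd 1"
    then have "nth_prime1 k = 1" by simp
    then show "4 \<le> k \<and> k \<le> 3" using prime_gt_1_nat[OF P_prime[of k]] by simp
  qed
  then show ?case using t sigma_one[of r] by (intro exI[of _ 1]) auto
next
  case (Suc i)
  then obtain m where m: "m > 0" "\<forall>k. 1 \<le> k \<longrightarrow> nth_prime1 k dvd m \<longrightarrow> 4 \<le> k \<and> k \<le> 3 + i"
    "sigma_neg r m \<le> t" "t < sigma_neg r m * u_tail (3 + i) r" by blast
  define k where "k = Suc (3 + i)"
  define q where "q = nth_prime1 k"
  define x where "x = aa r k"
  define Uk where "Uk = u_tail k r"
  have k4: "k \<ge> 4" "1 \<le> k" unfolding k_def by auto
  have x: "0 < x" "x < 1" unfolding x_def using aa_pos aa_lt1[OF r] by auto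
  have Uk1: "1 \<le> Uk" unfolding Uk_def using u_ge1[OF r] .
  have nmk: "1 + x \<le> Uk" unfolding x_def Uk_def using nonmighty_le[OF nm k4(1)] .
  have Usplit: "u_tail (3 + i) r = (1 / (1 - x)) * Uk"
    unfolding Uk_def x_def k_def using u_split[OF r, of "3+i"] unfolding fp_def by simp
  have sm: "sigma_neg r m \<ge> 1" using sigma_pos[OF m(1)] .
  have lim: "(\<lambda>e. sigma_neg r m * geo x e * Uk) \<longlonglongrightarrow> sigma_neg r m * (1 / (1 - x)) * Uk"
    by (intro tendsto_intros geo_lim) (use x in auto)
  have "t < sigma_neg r m * (1 / (1 - x)) * Uk" using m(4) Usplit by (simp add: mult.assoc)
  then have "eventually (\<lambda>e. t < sigma_neg r m * geo x e * Uk) sequentially"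
    using lim order_tendstoD(1) by blast
  then obtain e0 where e0: "t < sigma_neg r m * geo x e0 * Uk" by (auto simp: eventually_sequentially)
  define e where "e = (LEAST e. t < sigma_neg r m * geo x e * Uk)"
  have e1: "t < sigma_neg r m * geo x e * Uk" unfolding e_def by (rule LeastI[of _ e0]) (fact e0)
  have e2: "sigma_neg r m * geo x e \<le> t"
  proof (cases e)
    case 0
    then show ?thesis using m(3) by simp
  next
    case (Suc d)
    have "\<not> t < sigma_neg r m * geo x d * Uk"
      using not_less_Least[of d "\<lambda>e. t < sigma_neg r m * geo x e * Uk"] Suc unfolding e_def by simp
    then have a: "sigma_neg r m * geo x d * Uk \<le> t" by simp
    have "geo x e \<le> geo x d * (1 + x)" unfolding Suc using geo_ratio1[of x d] x by simp
    also have "\<dots> \<le> geo x d * Uk" using nmk geo_ge1[of x d] x by (intro mult_left_mono) auto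
    finally have "sigma_neg r m * geo x e \<le> sigma_neg r m * (geo x d * Uk)"
      using sm by (intro mult_left_mono) auto
    then show ?thesis using a by (simp add: mult.assoc)
  qed
  have qprime: "prime q" unfolding q_def by (rule P_prime)
  have qm: "\<not> q dvd m"
  proof
    assume "q dvd m"
    then have "k \<le> 3 + i" using m(2) k4 unfolding q_def by blast
    then show False unfolding k_def by simp
  qed
  have "coprime q m" using qm qprime by (simp add: prime_imp_coprime)
  then have cop: "coprime m (q^e)" by (simp add: coprime_commute)
  have sig: "sigma_neg r (m * q^e) = sigma_neg r m * geo x e"
    using sigma_mult[OF cop m(1)] sigma_pp[OF qprime, of r e] qprime
    unfolding sp_geo x_def aa_def q_def by (simp add: prime_gt_0_nat)
  have divs: "\<forall>k'. 1 \<le> k' \<longrightarrow> nth_prime1 k' dvd m * q^e \<longrightarrow> 4 \<le> k' \<and> k' \<le> 3 + Suc i"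
  proof (intro allI impI)
    fix k' assume k': "1 \<le> k'" "nth_prime1 k' dvd m * q^e"
    show "4 \<le> k' \<and> k' \<le> 3 + Suc i"
    proof (cases "nth_prime1 k' dvd m")
      case True then show ?thesis using m(2) k' by auto
    next
      case False
      then have "nth_prime1 k' dvd q^e" using k' P_prime[of k'] prime_dvd_mult_iff by blast
      then have "nth_prime1 k' dvd q" using P_prime[of k'] prime_dvd_power by blast
      then have "nth_prime1 k' = q" using P_prime[of k'] qprime primes_dvd_imp_eq by blast
      then have "k' = k" using P_inj[OF k'(1) k4(2)] unfolding q_def by simp
      then show ?thesis unfolding k_def by simp
    qed
  qed
  have pos: "m * q^e > 0" using m(1) qprime by (simp add: prime_gt_0_nat)
  show ?case
    using pos divs e1 e2 sig unfolding Uk_def k_def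
    by (intro exI[of _ "m * q^e"]) (auto simp: mult.assoc)
qed

lemma dens:
  assumes r: "r > 1" and nm: "\<forall>m > 3. \<not> mighty r m"
    and t: "1 \<le> t" "t < u_tail 3 r" and eps: "\<epsilon> > 0"
  shows "\<exists>m. m > 0 \<and> \<not> 2 dvd m \<and> \<not> 3 dvd m \<and> \<not> 5 dvd m \<and> \<bar>sigma_neg r m - t\<bar> < \<epsilon>"
proof -
  have "(\<lambda>n. u_tail n r) \<longlonglongrightarrow> 1" by (rule u_lim[OF r])
  then have "eventually (\<lambda>n. u_tail n r < 1 + \<epsilon> / t) sequentially"
    using eps t by (intro order_tendstoD(2)) auto
  then obtain N where N: "\<And>n. n \<ge> N \<Longrightarrow> u_tail n r < 1 + \<epsilon> / t"
    by (auto simp: eventually_sequentially)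
  obtain m where m: "m > 0" "\<forall>k. 1 \<le> k \<longrightarrow> nth_prime1 k dvd m \<longrightarrow> 4 \<le> k \<and> k \<le> 3 + N"
    "sigma_neg r m \<le> t" "t < sigma_neg r m * u_tail (3 + N) r"
    using dens_step[OF r nm t, of N] by blast
  have uN: "u_tail (3 + N) r < 1 + \<epsilon> / t" using N by simp
  have sm: "sigma_neg r m \<ge> 1" using sigma_pos[OF m(1)] .
  have "t - sigma_neg r m < sigma_neg r m * (u_tail (3 + N) r - 1)" using m(4) by (simp add: algebra_simps)
  also have "\<dots> \<le> t * (u_tail (3 + N) r - 1)"
    using m(3) u_ge1[OF r, of "3+N"] by (intro mult_right_mono) auto
  also have "\<dots> < t * (\<epsilon> / t)" using uN t by (intro mult_strict_left_mono) auto
  also have "\<dots> = \<epsilon>" using t by simp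
  finally have close: "\<bar>sigma_neg r m - t\<bar> < \<epsilon>" using m(3) by simp
  have "\<not> nth_prime1 k dvd m" if "k \<in> {1,2,3}" for k
  proof
    assume "nth_prime1 k dvd m"
    moreover have "1 \<le> k" using that by auto
    ultimately have "4 \<le> k" using m(2) by blast
    then show False using that by auto
  qed
  then have "\<not> 2 dvd m" "\<not> 3 dvd m" "\<not> 5 dvd m" using P1 P2 P3 by (metis insertI1 insertI2)+
  then show ?thesis using m(1) close by blast
qed

definition T :: "real \<Rightarrow> real set" where
  "T r = sigma_closure r"

lemma sigma_in_T: "n \<ge> 1 \<Longrightarrow> sigma_neg r n \<in> sigma_closure r"
  unfolding sigma_closure_def by (rule closure_subset[THEN subsetD]) auto

lemma sigma_235:
  "sigma_neg r (2^a * 3^b * 5^c) = sp r 2 a * sp r 3 b * sp r 5 c"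
proof -
  have c1: "coprime (2^a * 3^b) (5^c::nat)"
    by (simp add: coprime_commute[of 2] coprime_commute[of 3]
        prime_imp_coprime[of "5::nat"] coprime_power_right_iff)
  have c2: "coprime (2^a) (3^b::nat)" by (simp add: coprime_power_right_iff)
  have "sigma_neg r (2^a * 3^b * 5^c) = sigma_neg r (2^a * 3^b) * sigma_neg r (5^c)"
    by (rule sigma_mult[OF c1]) auto
  also have "sigma_neg r (2^a * 3^b) = sigma_neg r (2^a) * sigma_neg r (3^b)"
    by (rule sigma_mult[OF c2]) auto
  finally show ?thesis
    by (simp add: sigma_pp[of 2] sigma_pp[of 3] sigma_pp[of 5])
qed

lemma cop235:
  fixes m :: nat
  assumes "\<not> 2 dvd m" "\<not> 3 dvd m" "\<not> 5 dvd m"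
  shows "coprime (2^a * 3^b * 5^c) m"
proof -
  have "coprime (2::nat) m" "coprime (3::nat) m" "coprime (5::nat) m"
    using assms by (auto intro!: prime_imp_coprime)
  then show ?thesis by simp
qed

lemma piece_in_T:
  assumes r: "r > 1" and nm: "\<forall>m > 3. \<not> mighty r m"
    and t: "1 \<le> t" "t < u_tail 3 r"
  shows "sp r 2 a * sp r 3 b * sp r 5 c * t \<in> sigma_closure r"
proof -
  let ?n0 = "2^a * 3^b * 5^c :: nat"
  let ?s = "sp r 2 a * sp r 3 b * sp r 5 c"
  have s0: "?s = sigma_neg r ?n0" using sigma_235 by simp
  have spos: "?s \<ge> 1" using s0 sigma_pos[of ?n0 r] by simp
  show ?thesis unfolding sigma_closure_def closure_approachable
  proof (intro allI impI)
    fix e :: real assume e: "e > 0"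
    obtain m where m: "m > 0" "\<not> 2 dvd m" "\<not> 3 dvd m" "\<not> 5 dvd m"
      "\<bar>sigma_neg r m - t\<bar> < e / ?s"
      using dens[OF r nm t, of "e / ?s"] e spos by auto
    have sig: "sigma_neg r (?n0 * m) = ?s * sigma_neg r m"
      using sigma_mult[OF cop235[OF m(2-4)]] m(1) s0 by simp
    have "sigma_neg r (?n0 * m) - ?s * t = ?s * (sigma_neg r m - t)"
      unfolding sig by (simp add: right_diff_distrib)
    then have "dist (sigma_neg r (?n0 * m)) (?s * t) = \<bar>?s\<bar> * \<bar>sigma_neg r m - t\<bar>"
      unfolding dist_real_def by (simp only: abs_mult)
    also have "\<bar>?s\<bar> = ?s" using spos by simp
    finally have "dist (sigma_neg r (?n0 * m)) (?s * t) = ?s * \<bar>sigma_neg r m - t\<bar>" .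
    also have "\<dots> < ?s * (e / ?s)" using m(5) spos by (intro mult_strict_left_mono) auto
    also have "\<dots> = e"
    proof -
      have ne: "?s \<noteq> 0" using spos by linarith
      show ?thesis using ne by (metis nonzero_mult_div_cancel_left times_divide_eq_right)
    qed
    finally show "\<exists>y\<in>sigma_neg r ` {n. n \<ge> 1}. dist y (?s * t) < e"
      using m(1) by (intro bexI[of _ "sigma_neg r (?n0 * m)"]) auto
  qed
qed

lemma sigma_decomp:
  assumes r: "r > 1" and n: "n \<ge> 1"
  shows "\<exists>a b c t. sigma_neg r n = sp r 2 a * sp r 3 b * sp r 5 c * t \<and> 1 \<le> t \<and> t \<le> u_tail 3 r"
proof -
  obtain a m1 where 1: "n = 2^a * m1" "\<not> 2 dvd m1" "m1 > 0" using decomp_p[of 2 n] n by auto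
  obtain b m2 where 2: "m1 = 3^b * m2" "\<not> 3 dvd m2" "m2 > 0" using decomp_p[of 3 m1] 1(3) by auto
  obtain c m where 3: "m2 = 5^c * m" "\<not> 5 dvd m" "m > 0" using decomp_p[of 5 m2] 2(3) by auto
  have m2': "\<not> 2 dvd m" using 1(2) 2(1) 3(1) by auto
  have m3': "\<not> 3 dvd m" using 2(2) 3(1) by auto
  have eq: "n = 2^a * 3^b * 5^c * m" using 1(1) 2(1) 3(1) by (simp add: mult.assoc)
  have "sigma_neg r n = sigma_neg r (2^a * 3^b * 5^c) * sigma_neg r m"
    unfolding eq using sigma_mult[OF cop235[OF m2' m3' 3(2)]] 3(3) by simp
  then have "sigma_neg r n = sp r 2 a * sp r 3 b * sp r 5 c * sigma_neg r m"
    using sigma_235 by simp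
  moreover have "1 \<le> sigma_neg r m" using sigma_pos[OF 3(3)] .
  moreover have "sigma_neg r m \<le> u_tail 3 r" using sigma_le_U3[OF r 3(3) m2' m3' 3(2)] .
  ultimately show ?thesis by blast
qed

lemma comps_bound:
  fixes S :: "real set" and Ks :: "real set list"
  assumes cov: "S \<subseteq> \<Union>(set Ks)" and sub: "\<And>K. K \<in> set Ks \<Longrightarrow> K \<subseteq> S \<and> connected K"
  shows "finite (components S) \<and> card (components S) \<le> length Ks"
proof -
  let ?h = "\<lambda>K. connected_component_set S (SOME y. y \<in> K)"
  have incl: "components S \<subseteq> ?h ` set Ks"
  proof
    fix C assume "C \<in> components S"
    then obtain x where x: "x \<in> S" "C = connected_component_set S x"
      unfolding components_def by blast
    obtain K where K: "K \<in> set Ks" "x \<in> K" using cov x(1) by blast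
    have KS: "K \<subseteq> connected_component_set S x"
      using sub[OF K(1)] K(2) by (intro connected_component_maximal) auto
    have yK: "(SOME y. y \<in> K) \<in> K" using K(2) by (rule someI)
    then have "(SOME y. y \<in> K) \<in> connected_component_set S x" using KS by blast
    then have "connected_component_set S (SOME y. y \<in> K) = connected_component_set S x"
      by (simp add: connected_component_eq)
    then show "C \<in> ?h ` set Ks" using x K by auto
  qed
  have fin: "finite (?h ` set Ks)" by simp
  have "card (components S) \<le> card (?h ` set Ks)" using card_mono[OF fin incl] .
  also have "\<dots> \<le> card (set Ks)" by (rule card_image_le) simp
  also have "\<dots> \<le> length Ks" by (rule card_length)
  finally show ?thesis using finite_subset[OF incl fin] by simp
qed

lemma chain:
  fixes g :: "nat \<Rightarrow> real" and S :: "real set"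
  assumes gpos: "\<And>c. 0 < g c" and lim: "g \<longlonglongrightarrow> G"
    and step: "\<And>c. g (Suc c) * \<alpha> \<le> g c * \<beta>" and \<alpha>: "0 < \<alpha>"
    and cov: "\<And>c t. \<alpha> \<le> t \<Longrightarrow> t < \<beta> \<Longrightarrow> g c * t \<in> S"
  shows "{g 0 * \<alpha> ..< G * \<beta>} \<subseteq> S"
proof
  fix s assume s: "s \<in> {g 0 * \<alpha> ..< G * \<beta>}"
  have "(\<lambda>c. g c * \<beta>) \<longlonglongrightarrow> G * \<beta>" by (intro tendsto_intros lim)
  then have "eventually (\<lambda>c. s < g c * \<beta>) sequentially"
    using s by (intro order_tendstoD(1)) auto
  then obtain c1 where c1: "s < g c1 * \<beta>" by (auto simp: eventually_sequentially)
  define c where "c = (LEAST c. s < g c * \<beta>)"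
  have hc: "s < g c * \<beta>" unfolding c_def by (rule LeastI[of _ c1]) (fact c1)
  have lo: "g c * \<alpha> \<le> s"
  proof (cases c)
    case 0 then show ?thesis using s by simp
  next
    case (Suc d)
    have "\<not> s < g d * \<beta>" using not_less_Least[of d "\<lambda>c. s < g c * \<beta>"] Suc unfolding c_def by simp
    then show ?thesis using step[of d] Suc by simp
  qed
  define t where "t = s / g c"
  have gc: "0 < g c" by (rule gpos)
  have st: "s = g c * t" unfolding t_def using gc by simp
  have "\<alpha> \<le> t" using lo gc unfolding t_def by (simp add: field_simps mult.commute)
  moreover have "t < \<beta>" using hc gc unfolding t_def by (simp add: field_simps mult.commute)
  ultimately show "s \<in> S" using cov st by simp
qed

lemma closed_extend:
  fixes S :: "real set"
  assumes "closed S" "lo < hi" "{lo..<hi} \<subseteq> S"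
  shows "{lo..hi} \<subseteq> S"
proof -
  have "closure {lo..<hi} \<subseteq> S" using assms(1,3) by (rule closure_minimal[rotated])
  moreover have "closure {lo..<hi} = {lo..hi}" using assms(2) by (rule closure_atLeastLessThan)
  ultimately show ?thesis by simp
qed

lemma geo_lim_Suc: "0 \<le> x \<Longrightarrow> x < 1 \<Longrightarrow> (\<lambda>e. geo x (e + k)) \<longlonglongrightarrow> 1 / (1 - x)"
  using geo_lim[of x] LIMSEQ_ignore_initial_segment by blast

lemma pw_lo52:
  fixes q s r :: real
  assumes "0 < q" "q \<le> 1" "r \<le> 5/2" "0 \<le> s" "s^2 \<le> q"
  shows "q^2 * s \<le> q powr r"
proof -
  have "s \<le> sqrt q" using assms by (simp add: real_le_rsqrt)
  have "q powr (5/2) = q powr (2 + 1/2)" by simp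
  also have "\<dots> = q powr 2 * q powr (1/2)" by (rule powr_add)
  also have "\<dots> = q^2 * sqrt q" using assms(1) by (simp add: powr_half_sqrt powr_numeral)
  finally have e: "q powr (5/2) = q^2 * sqrt q" .
  have "q^2 * s \<le> q^2 * sqrt q" using \<open>s \<le> sqrt q\<close> by (simp add: mult_left_mono)
  also have "\<dots> = q powr (5/2)" using e by simp
  also have "\<dots> \<le> q powr r" using assms by (intro powr_mono') auto
  finally show ?thesis .
qed

lemma pw_lo32:
  fixes q s r :: real
  assumes "0 < q" "q \<le> 1" "r \<le> 3/2" "0 \<le> s" "s^2 \<le> q"
  shows "q * s \<le> q powr r"
proof -
  have "s \<le> sqrt q" using assms by (simp add: real_le_rsqrt)
  have "q powr (3/2) = q powr (1 + 1/2)" by simp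
  also have "\<dots> = q powr 1 * q powr (1/2)" by (rule powr_add)
  also have "\<dots> = q * sqrt q" using assms(1) by (simp add: powr_half_sqrt)
  finally have e: "q powr (3/2) = q * sqrt q" .
  have "q * s \<le> q * sqrt q" using \<open>s \<le> sqrt q\<close> assms(1) by (simp add: mult_left_mono)
  also have "\<dots> = q powr (3/2)" using e by simp
  also have "\<dots> \<le> q powr r" using assms by (intro powr_mono') auto
  finally show ?thesis .
qed

lemma pw_up32:
  fixes q s r :: real
  assumes "0 < q" "q \<le> 1" "3/2 \<le> r" "0 \<le> s" "q \<le> s^2"
  shows "q powr r \<le> q * s"
proof -
  have "sqrt q \<le> s" using assms by (metis real_sqrt_le_iff real_sqrt_pow2_iff power2_eq_square real_sqrt_mult_self abs_of_nonneg real_sqrt_abs)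
  have "q powr (3/2) = q powr (1 + 1/2)" by simp
  also have "\<dots> = q powr 1 * q powr (1/2)" by (rule powr_add)
  also have "\<dots> = q * sqrt q" using assms(1) by (simp add: powr_half_sqrt)
  finally have e: "q powr (3/2) = q * sqrt q" .
  have "q powr r \<le> q powr (3/2)" using assms by (intro powr_mono') auto
  also have "\<dots> = q * sqrt q" using e by simp
  also have "\<dots> \<le> q * s" using \<open>sqrt q \<le> s\<close> assms(1) by (simp add: mult_left_mono)
  finally show ?thesis .
qed

lemma pw_up32g:
  fixes q s r :: real
  assumes "1 \<le> q" "r \<le> 3/2" "0 \<le> s" "q \<le> s^2"
  shows "q powr r \<le> q * s"
proof -
  have "sqrt q \<le> s" using assms by (metis real_sqrt_le_iff real_sqrt_pow2_iff power2_eq_square real_sqrt_mult_self abs_of_nonneg real_sqrt_abs)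
  have q0: "0 < q" using assms by simp
  have "q powr (3/2) = q powr (1 + 1/2)" by simp
  also have "\<dots> = q powr 1 * q powr (1/2)" by (rule powr_add)
  also have "\<dots> = q * sqrt q" using q0 by (simp add: powr_half_sqrt)
  finally have e: "q powr (3/2) = q * sqrt q" .
  have "q powr r \<le> q powr (3/2)" using assms by (intro powr_mono) auto
  also have "\<dots> = q * sqrt q" using e by simp
  also have "\<dots> \<le> q * s" using \<open>sqrt q \<le> s\<close> q0 by (simp add: mult_left_mono)
  finally show ?thesis .
qed

lemma ratio_powr:
  fixes a b r :: real
  assumes "0 < a" "0 < b"
  shows "(a / b) powr r = b powr (-r) / a powr (-r)"
  using assms by (simp add: powr_divide powr_minus_divide)

lemma sq_powr: 
  fixes a r :: real
  assumes "0 < a"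
  shows "(a * a) powr (-r) = (a powr (-r))^2"
  using assms by (simp add: powr_mult power2_eq_square)

lemma cube_powr: 
  fixes a r :: real
  assumes "0 < a"
  shows "(a * a * a) powr (-r) = (a powr (-r))^3"
  using assms by (simp add: powr_mult power3_eq_cube)

context
  fixes r x y z w :: real
  assumes r1: "r > 1"
  defines "x \<equiv> (2::real) powr (-r)" and "y \<equiv> (3::real) powr (-r)"
      and "z \<equiv> (5::real) powr (-r)" and "w \<equiv> (7::real) powr (-r)"
begin

lemma xyzw_pos: "0 < x" "0 < y" "0 < z" "0 < w"
  unfolding x_def y_def z_def w_def by auto

lemma x2: "(4::real) powr (-r) = x^2" unfolding x_def using sq_powr[of 2 r] by simp
lemma x3: "(8::real) powr (-r) = x^3" unfolding x_def using cube_powr[of 2 r] by simp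
lemma y2: "(9::real) powr (-r) = y^2" unfolding y_def using sq_powr[of 3 r] by simp
lemma z2: "(25::real) powr (-r) = z^2" unfolding z_def using sq_powr[of 5 r] by simp

lemma g_z2: "z^2 \<le> w"
  unfolding z2[symmetric] w_def using r1 by (intro powr_mono2') auto
lemma g_y2: "y^2 \<le> w"
  unfolding y2[symmetric] w_def using r1 by (intro powr_mono2') auto
lemma g_x3: "x^3 \<le> w"
  unfolding x3[symmetric] w_def using r1 by (intro powr_mono2') auto
lemma g_zy: "z \<le> y"
  unfolding z_def y_def using r1 by (intro powr_mono2') auto
lemma g_yx: "y \<le> x"
  unfolding x_def y_def using r1 by (intro powr_mono2') auto
lemma g_wz: "w \<le> z"
  unfolding z_def w_def using r1 by (intro powr_mono2') auto
lemma x_half: "x < 1/2"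
proof -
  have "x < 2 powr (-1)" unfolding x_def using r1 by (intro powr_less_mono) auto
  then show ?thesis by (simp add: powr_minus_divide)
qed

lemma h1: assumes "r \<le> 5/2" shows "z \<le> y^2 + 2*w"
proof -
  have e0: "(5/9::real) powr r = y^2 / z" using ratio_powr[of 5 9 r] y2 unfolding z_def by simp
  have c0: "(5/9::real)^2 * (7453/10000) \<le> (5/9::real) powr r" by (rule pw_lo52) (use assms in \<open>auto simp: power2_eq_square\<close>)
  have d0: "(5/9::real)^2 * (7453/10000) \<le> y^2 / z" using c0 unfolding e0 .
  have e1: "(5/7::real) powr r = w / z" using ratio_powr[of 5 7 r] unfolding z_def w_def by simp
  have c1: "(5/7::real)^2 * (8451/10000) \<le> (5/7::real) powr r" by (rule pw_lo52) (use assms in \<open>auto simp: power2_eq_square\<close>)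
  have d1: "(5/7::real)^2 * (8451/10000) \<le> w / z" using c1 unfolding e1 .
  have num: "1 \<le> ((5/9::real)^2 * (7453/10000)) + 2 * ((5/7::real)^2 * (8451/10000))" by (simp add: power2_eq_square)
  have "1 \<le> (y^2 / z) + 2 * (w / z)" using num d0 d1 by linarith
  then show ?thesis using xyzw_pos by (simp add: field_simps)
qed

lemma h2: assumes "r \<le> 5/2" shows "x^2 \<le> z + 2*w"
proof -
  have e0: "(4/5::real) powr r = z / x^2" using ratio_powr[of 4 5 r] x2 unfolding z_def by simp
  have c0: "(4/5::real)^2 * (559/625) \<le> (4/5::real) powr r" by (rule pw_lo52) (use assms in \<open>auto simp: power2_eq_square\<close>)
  have d0: "(4/5::real)^2 * (559/625) \<le> z / x^2" using c0 unfolding e0 .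
  have e1: "(4/7::real) powr r = w / x^2" using ratio_powr[of 4 7 r] x2 unfolding w_def by simp
  have c1: "(4/7::real)^2 * (7559/10000) \<le> (4/7::real) powr r" by (rule pw_lo52) (use assms in \<open>auto simp: power2_eq_square\<close>)
  have d1: "(4/7::real)^2 * (7559/10000) \<le> w / x^2" using c1 unfolding e1 .
  have num: "1 \<le> ((4/5::real)^2 * (559/625)) + 2 * ((4/7::real)^2 * (7559/10000))" by (simp add: power2_eq_square)
  have "1 \<le> (z / x^2) + 2 * (w / x^2)" using num d0 d1 by linarith
  then show ?thesis using xyzw_pos by (simp add: field_simps)
qed

lemma h3: assumes "r \<le> 5/2" shows "z \<le> x^3 + 2*w"
proof -
  have e0: "(5/8::real) powr r = x^3 / z" using ratio_powr[of 5 8 r] x3 unfolding z_def by simp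
  have c0: "(5/8::real)^2 * (1581/2000) \<le> (5/8::real) powr r" by (rule pw_lo52) (use assms in \<open>auto simp: power2_eq_square\<close>)
  have d0: "(5/8::real)^2 * (1581/2000) \<le> x^3 / z" using c0 unfolding e0 .
  have e1: "(5/7::real) powr r = w / z" using ratio_powr[of 5 7 r] unfolding z_def w_def by simp
  have c1: "(5/7::real)^2 * (8451/10000) \<le> (5/7::real) powr r" by (rule pw_lo52) (use assms in \<open>auto simp: power2_eq_square\<close>)
  have d1: "(5/7::real)^2 * (8451/10000) \<le> w / z" using c1 unfolding e1 .
  have num: "1 \<le> ((5/8::real)^2 * (1581/2000)) + 2 * ((5/7::real)^2 * (8451/10000))" by (simp add: power2_eq_square)
  have "1 \<le> (x^3 / z) + 2 * (w / z)" using num d0 d1 by linarith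
  then show ?thesis using xyzw_pos by (simp add: field_simps)
qed

lemma h4: assumes "r \<le> 5/2" shows "y \<le> z + x^2 + 2*w"
proof -
  have e0: "(3/5::real) powr r = z / y" using ratio_powr[of 3 5 r] unfolding z_def y_def by simp
  have c0: "(3/5::real)^2 * (1549/2000) \<le> (3/5::real) powr r" by (rule pw_lo52) (use assms in \<open>auto simp: power2_eq_square\<close>)
  have d0: "(3/5::real)^2 * (1549/2000) \<le> z / y" using c0 unfolding e0 .
  have e1: "(3/4::real) powr r = x^2 / y" using ratio_powr[of 3 4 r] x2 unfolding y_def by simp
  have c1: "(3/4::real)^2 * (433/500) \<le> (3/4::real) powr r" by (rule pw_lo52) (use assms in \<open>auto simp: power2_eq_square\<close>)
  have d1: "(3/4::real)^2 * (433/500) \<le> x^2 / y" using c1 unfolding e1 .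
  have e2: "(3/7::real) powr r = w / y" using ratio_powr[of 3 7 r] unfolding w_def y_def by simp
  have c2: "(3/7::real)^2 * (3273/5000) \<le> (3/7::real) powr r" by (rule pw_lo52) (use assms in \<open>auto simp: power2_eq_square\<close>)
  have d2: "(3/7::real)^2 * (3273/5000) \<le> w / y" using c2 unfolding e2 .
  have num: "1 \<le> ((3/5::real)^2 * (1549/2000)) + ((3/4::real)^2 * (433/500)) + 2 * ((3/7::real)^2 * (3273/5000))" by (simp add: power2_eq_square)
  have "1 \<le> (z / y) + (x^2 / y) + 2 * (w / y)" using num d0 d1 d2 by linarith
  then show ?thesis using xyzw_pos by (simp add: field_simps)
qed

lemma h5: assumes "3/2 \<le> r" shows "z * (1 + x) \<le> x^2"
proof -
  have e0: "(4/5::real) powr r = z / x^2" using ratio_powr[of 4 5 r] x2 unfolding z_def by simp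
  have c0: "(4/5::real) powr r \<le> (4/5::real) * (1789/2000)" by (rule pw_up32) (use assms in \<open>auto simp: power2_eq_square\<close>)
  have d0: "z / x^2 \<le> (4/5::real) * (1789/2000)" using c0 unfolding e0 .
  have e1: "(2/5::real) powr r = z / x" using ratio_powr[of 2 5 r] unfolding z_def x_def by simp
  have c1: "(2/5::real) powr r \<le> (2/5::real) * (253/400)" by (rule pw_up32) (use assms in \<open>auto simp: power2_eq_square\<close>)
  have d1: "z / x \<le> (2/5::real) * (253/400)" using c1 unfolding e1 .
  have num: "((4/5::real) * (1789/2000)) + ((2/5::real) * (253/400)) \<le> 1" by (simp add: power2_eq_square)
  have "(z / x^2) + (z / x) \<le> 1" using num d0 d1 by linarith
  then show ?thesis using xyzw_pos by (simp add: field_simps power2_eq_square)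
qed

lemma l1: assumes "r \<le> 3/2" shows "z \<le> 2*w"
proof -
  have e0: "(7/5::real) powr r = z / w" using ratio_powr[of 7 5 r] unfolding z_def w_def by simp
  have c0: "(7/5::real) powr r \<le> (7/5::real) * (11833/10000)" by (rule pw_up32g) (use assms in \<open>auto simp: power2_eq_square\<close>)
  have d0: "z / w \<le> (7/5::real) * (11833/10000)" using c0 unfolding e0 .
  have num: "((7/5::real) * (11833/10000)) \<le> 2" by (simp add: power2_eq_square)
  have "(z / w) \<le> 2" using num d0 by linarith
  then show ?thesis using xyzw_pos by (simp add: field_simps)
qed

lemma l2: assumes "r \<le> 3/2" shows "y \<le> z + 2*w"
proof -
  have e0: "(3/5::real) powr r = z / y" using ratio_powr[of 3 5 r] unfolding z_def y_def by simp
  have c0: "(3/5::real) * (1549/2000) \<le> (3/5::real) powr r" by (rule pw_lo32) (use assms in \<open>auto simp: power2_eq_square\<close>)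
  have d0: "(3/5::real) * (1549/2000) \<le> z / y" using c0 unfolding e0 .
  have e1: "(3/7::real) powr r = w / y" using ratio_powr[of 3 7 r] unfolding w_def y_def by simp
  have c1: "(3/7::real) * (3273/5000) \<le> (3/7::real) powr r" by (rule pw_lo32) (use assms in \<open>auto simp: power2_eq_square\<close>)
  have d1: "(3/7::real) * (3273/5000) \<le> w / y" using c1 unfolding e1 .
  have num: "1 \<le> ((3/5::real) * (1549/2000)) + 2 * ((3/7::real) * (3273/5000))" by (simp add: power2_eq_square)
  have "1 \<le> (z / y) + 2 * (w / y)" using num d0 d1 by linarith
  then show ?thesis using xyzw_pos by (simp add: field_simps)
qed

lemma l3: assumes "r \<le> 3/2" shows "x \<le> y + z + 2*w"
proof -
  have e0: "(2/3::real) powr r = y / x" using ratio_powr[of 2 3 r] unfolding x_def y_def by simp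
  have c0: "(2/3::real) * (2041/2500) \<le> (2/3::real) powr r" by (rule pw_lo32) (use assms in \<open>auto simp: power2_eq_square\<close>)
  have d0: "(2/3::real) * (2041/2500) \<le> y / x" using c0 unfolding e0 .
  have e1: "(2/5::real) powr r = z / x" using ratio_powr[of 2 5 r] unfolding x_def z_def by simp
  have c1: "(2/5::real) * (1581/2500) \<le> (2/5::real) powr r" by (rule pw_lo32) (use assms in \<open>auto simp: power2_eq_square\<close>)
  have d1: "(2/5::real) * (1581/2500) \<le> z / x" using c1 unfolding e1 .
  have e2: "(2/7::real) powr r = w / x" using ratio_powr[of 2 7 r] unfolding w_def x_def by simp
  have c2: "(2/7::real) * (1069/2000) \<le> (2/7::real) powr r" by (rule pw_lo32) (use assms in \<open>auto simp: power2_eq_square\<close>)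
  have d2: "(2/7::real) * (1069/2000) \<le> w / x" using c2 unfolding e2 .
  have num: "1 \<le> ((2/3::real) * (2041/2500)) + ((2/5::real) * (1581/2500)) + 2 * ((2/7::real) * (1069/2000))" by (simp add: power2_eq_square)
  have "1 \<le> (y / x) + (z / x) + 2 * (w / x)" using num d0 d1 d2 by linarith
  then have "x * 1 \<le> x * ((y / x) + (z / x) + 2 * (w / x))" using xyzw_pos by (intro mult_left_mono) auto
  also have "\<dots> = y + z + 2*w" using xyzw_pos by (simp add: field_simps)
  finally show ?thesis by simp
qed

end

definition gterm :: "nat \<Rightarrow> real" where
  "gterm n = (7 / real n) powr (5/2)"

lemma gterm_le:
  fixes q s :: real
  assumes "0 < q" "q \<le> 1" "0 \<le> s" "q \<le> s^2"
  shows "q powr (5/2) \<le> q^2 * s"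
proof -
  have "sqrt q \<le> s" using assms by (metis real_sqrt_le_iff real_sqrt_pow2_iff power2_eq_square real_sqrt_mult_self abs_of_nonneg real_sqrt_abs)
  have "q powr (5/2) = q powr (2 + 1/2)" by simp
  also have "\<dots> = q powr 2 * q powr (1/2)" by (rule powr_add)
  also have "\<dots> = q^2 * sqrt q" using assms(1) by (simp add: powr_half_sqrt powr_numeral)
  also have "\<dots> \<le> q^2 * s" using \<open>sqrt q \<le> s\<close> by (simp add: mult_left_mono)
  finally show ?thesis .
qed

lemma gterm_nonneg: "0 \<le> gterm n" unfolding gterm_def by simp

lemma ht_11: "gterm 11 \<le> 3230457/10000000"
proof -
  have "gterm 11 \<le> (7/11)^2 * (31909/40000)" unfolding gterm_def of_nat_numeral by (rule gterm_le) (auto simp: power2_eq_square)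
  moreover have "(7/11::real)^2 * (31909/40000) \<le> 3230457/10000000" by (simp add: power2_eq_square)
  ultimately show ?thesis by linarith
qed

lemma ht_13: "gterm 13 \<le> 1063793/5000000"
proof -
  have "gterm 13 \<le> (7/13)^2 * (3669/5000)" unfolding gterm_def of_nat_numeral by (rule gterm_le) (auto simp: power2_eq_square)
  moreover have "(7/13::real)^2 * (3669/5000) \<le> 1063793/5000000" by (simp add: power2_eq_square)
  ultimately show ?thesis by linarith
qed

lemma ht_17: "gterm 17 \<le> 217597/2000000"
proof -
  have "gterm 17 \<le> (7/17)^2 * (641689/1000000)" unfolding gterm_def of_nat_numeral by (rule gterm_le) (auto simp: power2_eq_square)
  moreover have "(7/17::real)^2 * (641689/1000000) \<le> 217597/2000000" by (simp add: power2_eq_square)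
  ultimately show ?thesis by linarith
qed

lemma ht_19: "gterm 19 \<le> 6591/80000"
proof -
  have "gterm 19 \<le> (7/19)^2 * (606977/1000000)" unfolding gterm_def of_nat_numeral by (rule gterm_le) (auto simp: power2_eq_square)
  moreover have "(7/19::real)^2 * (606977/1000000) \<le> 6591/80000" by (simp add: power2_eq_square)
  ultimately show ?thesis by linarith
qed

lemma ht_23: "gterm 23 \<le> 511007/10000000"
proof -
  have "gterm 23 \<le> (7/23)^2 * (275839/500000)" unfolding gterm_def of_nat_numeral by (rule gterm_le) (auto simp: power2_eq_square)
  moreover have "(7/23::real)^2 * (275839/500000) \<le> 511007/10000000" by (simp add: power2_eq_square)
  ultimately show ?thesis by linarith
qed

lemma ht_29: "gterm 29 \<le> 143127/5000000"
proof -
  have "gterm 29 \<le> (7/29)^2 * (61413/125000)" unfolding gterm_def of_nat_numeral by (rule gterm_le) (auto simp: power2_eq_square)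
  moreover have "(7/29::real)^2 * (61413/125000) \<le> 143127/5000000" by (simp add: power2_eq_square)
  ultimately show ?thesis by linarith
qed

lemma ht_31: "gterm 31 \<le> 121147/5000000"
proof -
  have "gterm 31 \<le> (7/31)^2 * (475191/1000000)" unfolding gterm_def of_nat_numeral by (rule gterm_le) (auto simp: power2_eq_square)
  moreover have "(7/31::real)^2 * (475191/1000000) \<le> 121147/5000000" by (simp add: power2_eq_square)
  ultimately show ?thesis by linarith
qed

lemma ht_37: "gterm 37 \<le> 155683/10000000"
proof -
  have "gterm 37 \<le> (7/37)^2 * (434959/1000000)" unfolding gterm_def of_nat_numeral by (rule gterm_le) (auto simp: power2_eq_square)
  moreover have "(7/37::real)^2 * (434959/1000000) \<le> 155683/10000000" by (simp add: power2_eq_square)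
  ultimately show ?thesis by linarith
qed

lemma ht_41: "gterm 41 \<le> 24089/2000000"
proof -
  have "gterm 41 \<le> (7/41)^2 * (413197/1000000)" unfolding gterm_def of_nat_numeral by (rule gterm_le) (auto simp: power2_eq_square)
  moreover have "(7/41::real)^2 * (413197/1000000) \<le> 24089/2000000" by (simp add: power2_eq_square)
  ultimately show ?thesis by linarith
qed

lemma ht_43: "gterm 43 \<le> 26731/2500000"
proof -
  have "gterm 43 \<le> (7/43)^2 * (201737/500000)" unfolding gterm_def of_nat_numeral by (rule gterm_le) (auto simp: power2_eq_square)
  moreover have "(7/43::real)^2 * (201737/500000) \<le> 26731/2500000" by (simp add: power2_eq_square)
  ultimately show ?thesis by linarith
qed

lemma ht_47: "gterm 47 \<le> 42803/5000000"
proof -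
  have "gterm 47 \<le> (7/47)^2 * (385923/1000000)" unfolding gterm_def of_nat_numeral by (rule gterm_le) (auto simp: power2_eq_square)
  moreover have "(7/47::real)^2 * (385923/1000000) \<le> 42803/5000000" by (simp add: power2_eq_square)
  ultimately show ?thesis by linarith
qed

lemma ht_49: "gterm 49 \<le> 4821/625000"
proof -
  have "gterm 49 \<le> (7/49)^2 * (75593/200000)" unfolding gterm_def of_nat_numeral by (rule gterm_le) (auto simp: power2_eq_square)
  moreover have "(7/49::real)^2 * (75593/200000) \<le> 4821/625000" by (simp add: power2_eq_square)
  ultimately show ?thesis by linarith
qed

lemma ht_53: "gterm 53 \<le> 15849/2500000"
proof -
  have "gterm 53 \<le> (7/53)^2 * (181711/500000)" unfolding gterm_def of_nat_numeral by (rule gterm_le) (auto simp: power2_eq_square)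
  moreover have "(7/53::real)^2 * (181711/500000) \<le> 15849/2500000" by (simp add: power2_eq_square)
  ultimately show ?thesis by linarith
qed

lemma ht_59: "gterm 59 \<le> 24243/5000000"
proof -
  have "gterm 59 \<le> (7/59)^2 * (5382/15625)" unfolding gterm_def of_nat_numeral by (rule gterm_le) (auto simp: power2_eq_square)
  moreover have "(7/59::real)^2 * (5382/15625) \<le> 24243/5000000" by (simp add: power2_eq_square)
  ultimately show ?thesis by linarith
qed

lemma ht_61: "gterm 61 \<le> 44609/10000000"
proof -
  have "gterm 61 \<le> (7/61)^2 * (169377/500000)" unfolding gterm_def of_nat_numeral by (rule gterm_le) (auto simp: power2_eq_square)
  moreover have "(7/61::real)^2 * (169377/500000) \<le> 44609/10000000" by (simp add: power2_eq_square)
  ultimately show ?thesis by linarith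
qed

lemma ht_67: "gterm 67 \<le> 35283/10000000"
proof -
  have "gterm 67 \<le> (7/67)^2 * (32323/100000)" unfolding gterm_def of_nat_numeral by (rule gterm_le) (auto simp: power2_eq_square)
  moreover have "(7/67::real)^2 * (32323/100000) \<le> 35283/10000000" by (simp add: power2_eq_square)
  ultimately show ?thesis by linarith
qed

lemma ht_71: "gterm 71 \<le> 15261/5000000"
proof -
  have "gterm 71 \<le> (7/71)^2 * (313993/1000000)" unfolding gterm_def of_nat_numeral by (rule gterm_le) (auto simp: power2_eq_square)
  moreover have "(7/71::real)^2 * (313993/1000000) \<le> 15261/5000000" by (simp add: power2_eq_square)
  ultimately show ?thesis by linarith
qed

lemma ht_73: "gterm 73 \<le> 14237/5000000"
proof -
  have "gterm 73 \<le> (7/73)^2 * (154831/500000)" unfolding gterm_def of_nat_numeral by (rule gterm_le) (auto simp: power2_eq_square)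
  moreover have "(7/73::real)^2 * (154831/500000) \<le> 14237/5000000" by (simp add: power2_eq_square)
  ultimately show ?thesis by linarith
qed

lemma ht_77: "gterm 77 \<le> 24919/10000000"
proof -
  have "gterm 77 \<le> (7/77)^2 * (37689/125000)" unfolding gterm_def of_nat_numeral by (rule gterm_le) (auto simp: power2_eq_square)
  moreover have "(7/77::real)^2 * (37689/125000) \<le> 24919/10000000" by (simp add: power2_eq_square)
  ultimately show ?thesis by linarith
qed

lemma ht_79: "gterm 79 \<le> 5843/2500000"
proof -
  have "gterm 79 \<le> (7/79)^2 * (297671/1000000)" unfolding gterm_def of_nat_numeral by (rule gterm_le) (auto simp: power2_eq_square)
  moreover have "(7/79::real)^2 * (297671/1000000) \<le> 5843/2500000" by (simp add: power2_eq_square)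
  ultimately show ?thesis by linarith
qed

lemma ht_83: "gterm 83 \<le> 20657/10000000"
proof -
  have "gterm 83 \<le> (7/83)^2 * (290409/1000000)" unfolding gterm_def of_nat_numeral by (rule gterm_le) (auto simp: power2_eq_square)
  moreover have "(7/83::real)^2 * (290409/1000000) \<le> 20657/10000000" by (simp add: power2_eq_square)
  ultimately show ?thesis by linarith
qed

lemma ht_89: "gterm 89 \<le> 17349/10000000"
proof -
  have "gterm 89 \<le> (7/89)^2 * (5609/20000)" unfolding gterm_def of_nat_numeral by (rule gterm_le) (auto simp: power2_eq_square)
  moreover have "(7/89::real)^2 * (5609/20000) \<le> 17349/10000000" by (simp add: power2_eq_square)
  ultimately show ?thesis by linarith
qed

lemma ht_91: "gterm 91 \<le> 4103/2500000"
proof -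
  have "gterm 91 \<le> (7/91)^2 * (277351/1000000)" unfolding gterm_def of_nat_numeral by (rule gterm_le) (auto simp: power2_eq_square)
  moreover have "(7/91::real)^2 * (277351/1000000) \<le> 4103/2500000" by (simp add: power2_eq_square)
  ultimately show ?thesis by linarith
qed

lemma ht_97: "gterm 97 \<le> 1399/1000000"
proof -
  have "gterm 97 \<le> (7/97)^2 * (67159/250000)" unfolding gterm_def of_nat_numeral by (rule gterm_le) (auto simp: power2_eq_square)
  moreover have "(7/97::real)^2 * (67159/250000) \<le> 1399/1000000" by (simp add: power2_eq_square)
  ultimately show ?thesis by linarith
qed

lemma ht_101: "gterm 101 \<le> 6323/5000000"
proof -
  have "gterm 101 \<le> (7/101)^2 * (263263/1000000)" unfolding gterm_def of_nat_numeral by (rule gterm_le) (auto simp: power2_eq_square)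
  moreover have "(7/101::real)^2 * (263263/1000000) \<le> 6323/5000000" by (simp add: power2_eq_square)
  ultimately show ?thesis by linarith
qed

lemma ht_103: "gterm 103 \<le> 12041/10000000"
proof -
  have "gterm 103 \<le> (7/103)^2 * (130347/500000)" unfolding gterm_def of_nat_numeral by (rule gterm_le) (auto simp: power2_eq_square)
  moreover have "(7/103::real)^2 * (130347/500000) \<le> 12041/10000000" by (simp add: power2_eq_square)
  ultimately show ?thesis by linarith
qed

lemma ht_107: "gterm 107 \<le> 10947/10000000"
proof -
  have "gterm 107 \<le> (7/107)^2 * (10231/40000)" unfolding gterm_def of_nat_numeral by (rule gterm_le) (auto simp: power2_eq_square)
  moreover have "(7/107::real)^2 * (10231/40000) \<le> 10947/10000000" by (simp add: power2_eq_square)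
  ultimately show ?thesis by linarith
qed

lemma ht_109: "gterm 109 \<le> 2613/2500000"
proof -
  have "gterm 109 \<le> (7/109)^2 * (126709/500000)" unfolding gterm_def of_nat_numeral by (rule gterm_le) (auto simp: power2_eq_square)
  moreover have "(7/109::real)^2 * (126709/500000) \<le> 2613/2500000" by (simp add: power2_eq_square)
  ultimately show ?thesis by linarith
qed

lemma ht_113: "gterm 113 \<le> 597/625000"
proof -
  have "gterm 113 \<le> (7/113)^2 * (62223/250000)" unfolding gterm_def of_nat_numeral by (rule gterm_le) (auto simp: power2_eq_square)
  moreover have "(7/113::real)^2 * (62223/250000) \<le> 597/625000" by (simp add: power2_eq_square)
  ultimately show ?thesis by linarith
qed

lemma ht_119: "gterm 119 \<le> 8393/10000000"
proof -
  have "gterm 119 \<le> (7/119)^2 * (30317/125000)" unfolding gterm_def of_nat_numeral by (rule gterm_le) (auto simp: power2_eq_square)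
  moreover have "(7/119::real)^2 * (30317/125000) \<le> 8393/10000000" by (simp add: power2_eq_square)
  ultimately show ?thesis by linarith
qed

lemma ht_121: "gterm 121 \<le> 161/200000"
proof -
  have "gterm 121 \<le> (7/121)^2 * (240523/1000000)" unfolding gterm_def of_nat_numeral by (rule gterm_le) (auto simp: power2_eq_square)
  moreover have "(7/121::real)^2 * (240523/1000000) \<le> 161/200000" by (simp add: power2_eq_square)
  ultimately show ?thesis by linarith
qed

lemma ht_127: "gterm 127 \<le> 7133/10000000"
proof -
  have "gterm 127 \<le> (7/127)^2 * (234773/1000000)" unfolding gterm_def of_nat_numeral by (rule gterm_le) (auto simp: power2_eq_square)
  moreover have "(7/127::real)^2 * (234773/1000000) \<le> 7133/10000000" by (simp add: power2_eq_square)
  ultimately show ?thesis by linarith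
qed

lemma ht_131: "gterm 131 \<le> 6601/10000000"
proof -
  have "gterm 131 \<le> (7/131)^2 * (231161/1000000)" unfolding gterm_def of_nat_numeral by (rule gterm_le) (auto simp: power2_eq_square)
  moreover have "(7/131::real)^2 * (231161/1000000) \<le> 6601/10000000" by (simp add: power2_eq_square)
  ultimately show ?thesis by linarith
qed

lemma ht_133: "gterm 133 \<le> 1589/2500000"
proof -
  have "gterm 133 \<le> (7/133)^2 * (28677/125000)" unfolding gterm_def of_nat_numeral by (rule gterm_le) (auto simp: power2_eq_square)
  moreover have "(7/133::real)^2 * (28677/125000) \<le> 1589/2500000" by (simp add: power2_eq_square)
  ultimately show ?thesis by linarith
qed

lemma ht_137: "gterm 137 \<le> 2951/5000000"
proof -
  have "gterm 137 \<le> (7/137)^2 * (113021/500000)" unfolding gterm_def of_nat_numeral by (rule gterm_le) (auto simp: power2_eq_square)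
  moreover have "(7/137::real)^2 * (113021/500000) \<le> 2951/5000000" by (simp add: power2_eq_square)
  ultimately show ?thesis by linarith
qed

lemma ht_139: "gterm 139 \<le> 1423/2500000"
proof -
  have "gterm 139 \<le> (7/139)^2 * (22441/100000)" unfolding gterm_def of_nat_numeral by (rule gterm_le) (auto simp: power2_eq_square)
  moreover have "(7/139::real)^2 * (22441/100000) \<le> 1423/2500000" by (simp add: power2_eq_square)
  ultimately show ?thesis by linarith
qed

lemma ht_143: "gterm 143 \<le> 2651/5000000"
proof -
  have "gterm 143 \<le> (7/143)^2 * (221249/1000000)" unfolding gterm_def of_nat_numeral by (rule gterm_le) (auto simp: power2_eq_square)
  moreover have "(7/143::real)^2 * (221249/1000000) \<le> 2651/5000000" by (simp add: power2_eq_square)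
  ultimately show ?thesis by linarith
qed

lemma ht_149: "gterm 149 \<le> 299/625000"
proof -
  have "gterm 149 \<le> (7/149)^2 * (216749/1000000)" unfolding gterm_def of_nat_numeral by (rule gterm_le) (auto simp: power2_eq_square)
  moreover have "(7/149::real)^2 * (216749/1000000) \<le> 299/625000" by (simp add: power2_eq_square)
  ultimately show ?thesis by linarith
qed


definition Hl :: "nat list" where "Hl = [11, 13, 17, 19, 23, 29, 31, 37, 41, 43, 47, 49, 53, 59, 61, 67, 71, 73, 77, 79, 83, 89, 91, 97, 101, 103, 107, 109, 113, 119, 121, 127, 131, 133, 137, 139, 143, 149]"

lemma Hl_all: "list_all (\<lambda>p. (\<not> 2 dvd p \<and> \<not> 3 dvd p \<and> \<not> 5 dvd p) \<longrightarrow> p \<in> set Hl) [11..<151]"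
  unfolding Hl_def by code_simp

lemma Hl_cover: "11 \<le> (p::nat) \<Longrightarrow> p \<le> 150 \<Longrightarrow> \<not> 2 dvd p \<Longrightarrow> \<not> 3 dvd p \<Longrightarrow> \<not> 5 dvd p \<Longrightarrow> p \<in> set Hl"
proof -
  assume a: "11 \<le> p" "p \<le> 150" "\<not> 2 dvd p" "\<not> 3 dvd p" "\<not> 5 dvd p"
  have "p \<in> set [11..<151]" using a by (simp only: set_upt atLeastLessThan_iff) simp
  moreover have "\<forall>x\<in>set [11..<151]. (\<not> 2 dvd x \<and> \<not> 3 dvd x \<and> \<not> 5 dvd x) \<longrightarrow> x \<in> set Hl"
    using Hl_all by (simp only: list_all_iff)
  ultimately show ?thesis using a by blast
qed

lemma Hl_sum: "sum gterm (set Hl) \<le> 2334143/2500000"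
proof -
  have d: "distinct Hl" unfolding Hl_def by simp
  have "sum gterm (set Hl) = sum_list (map gterm Hl)" by (rule sum_list_distinct_conv_sum_set[OF d, symmetric])
  also have "\<dots> = gterm 11 + gterm 13 + gterm 17 + gterm 19 + gterm 23 + gterm 29 + gterm 31 + gterm 37 + gterm 41 + gterm 43 + gterm 47 + gterm 49 + gterm 53 + gterm 59 + gterm 61 + gterm 67 + gterm 71 + gterm 73 + gterm 77 + gterm 79 + gterm 83 + gterm 89 + gterm 91 + gterm 97 + gterm 101 + gterm 103 + gterm 107 + gterm 109 + gterm 113 + gterm 119 + gterm 121 + gterm 127 + gterm 131 + gterm 133 + gterm 137 + gterm 139 + gterm 143 + gterm 149" unfolding Hl_def by simp
  finally show ?thesis using ht_11 ht_13 ht_17 ht_19 ht_23 ht_29 ht_31 ht_37 ht_41 ht_43 ht_47 ht_49 ht_53 ht_59 ht_61 ht_67 ht_71 ht_73 ht_77 ht_79 ht_83 ht_89 ht_91 ht_97 ht_101 ht_103 ht_107 ht_109 ht_113 ht_119 ht_121 ht_127 ht_131 ht_133 ht_137 ht_139 ht_143 ht_149 by linarith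
qed

lemma odd_sum_ind:
  "75 \<le> M \<Longrightarrow> (\<Sum>j\<in>{75..<M}. 1 / (real (2*j+1))^2) \<le> 1/298 - 1 / (2 * (2 * real M - 1))"
proof (induction M rule: dec_induct)
  case base then show ?case by simp
next
  case (step M)
  have M: "real M \<ge> 75" using step by simp
  have "1 / (real (2*M+1))^2 \<le> 1 / (2 * (2 * real M - 1)) - 1 / (2 * (2 * real (Suc M) - 1))"
  proof -
    have e0: "1 / (2 * a) - 1 / (2 * b) = 1 / (a * b)" if ab: "a > 0" "b = a + 2" for a b :: real
    proof -
      have "1 / (2 * a) - 1 / (2 * b) = (b - a) / (2 * a * b)" using ab by (simp add: field_simps)
      also have "\<dots> = 2 / (2 * (a * b))" using ab by (simp add: mult.assoc)
      also have "\<dots> = 1 / (a * b)" by simp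
      finally show ?thesis .
    qed
    have e: "1 / (2 * (2 * real M - 1)) - 1 / (2 * (2 * real (Suc M) - 1)) = 1 / ((2 * real M - 1) * (2 * real M + 1))"
      using e0[of "2 * real M - 1" "2 * real (Suc M) - 1"] M by simp
    have "(2 * real M - 1) * (2 * real M + 1) \<le> (real (2*M+1))^2" by (simp add: power2_eq_square algebra_simps)
    then have "1 / (real (2*M+1))^2 \<le> 1 / ((2 * real M - 1) * (2 * real M + 1))"
      using M by (intro divide_left_mono) (auto intro!: mult_pos_pos)
    then show ?thesis using e by simp
  qed
  then show ?case using step.IH step.hyps by simp
qed

lemma odd_sum:
  assumes F: "finite F" "\<And>n. n \<in> F \<Longrightarrow> odd n \<and> 150 < n"
  shows "(\<Sum>n\<in>F. 1 / (real n)^2) \<le> 1/298"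
proof -
  obtain M0 where M0: "F \<subseteq> {..<M0}" using finite_nat_bounded[OF F(1)] by blast
  define M where "M = max M0 75"
  have sub: "F \<subseteq> (\<lambda>j. 2*j+1) ` {75..<M}"
  proof
    fix n assume n: "n \<in> F"
    then have "odd n" "150 < n" "n < M0" using F(2) M0 by auto
    then have "n = 2 * (n div 2) + 1" "75 \<le> n div 2" "n div 2 < M" unfolding M_def by (auto elim!: oddE)
    then show "n \<in> (\<lambda>j. 2*j+1) ` {75..<M}" by (metis atLeastLessThan_iff imageI)
  qed
  have "(\<Sum>n\<in>F. 1 / (real n)^2) \<le> (\<Sum>n\<in>(\<lambda>j. 2*j+1) ` {75..<M}. 1 / (real n)^2)"
    by (rule sum_mono2[OF _ sub]) auto
  also have "\<dots> = (\<Sum>j\<in>{75..<M}. 1 / (real (2*j+1))^2)"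
    by (subst sum.reindex) (auto simp: inj_on_def)
  also have "\<dots> \<le> 1/298 - 1 / (2 * (2 * real M - 1))" by (rule odd_sum_ind) (simp add: M_def)
  also have "\<dots> \<le> 1/298" unfolding M_def by simp
  finally show ?thesis .
qed

lemma gterm_tail: "150 \<le> n \<Longrightarrow> gterm n \<le> 49 * (8641/40000) * (1 / (real n)^2)"
proof -
  assume n: "150 \<le> n"
  have "gterm n \<le> (7 / real n)^2 * (8641/40000)" unfolding gterm_def
  proof (rule gterm_le)
    show "0 < 7 / real n" "7 / real n \<le> 1" using n by auto
    have "7 / real n \<le> 7 / 150" using n by (intro divide_left_mono) auto
    also have "\<dots> \<le> (8641/40000)^2" by (simp add: power2_eq_square)
    finally show "7 / real n \<le> (8641/40000)^2" .
  qed simp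
  then show ?thesis by (simp add: power_divide)
qed

definition Btot :: real where "Btot = 2334143/2500000 + 49 * (8641/40000) / 298"

lemma prime_sum_bound:
  assumes F: "finite F" "\<And>p. p \<in> F \<Longrightarrow> prime p \<and> 11 \<le> p"
  shows "sum gterm F \<le> Btot"
proof -
  define F1 where "F1 = F \<inter> {..150}"
  define F2 where "F2 = F \<inter> {150<..}"
  have FU: "F = F1 \<union> F2" "F1 \<inter> F2 = {}" unfolding F1_def F2_def by auto
  have fin: "finite F1" "finite F2" unfolding F1_def F2_def using F(1) by auto
  have s: "sum gterm F = sum gterm F1 + sum gterm F2"
    using FU fin by (simp add: sum.union_disjoint)
  have "F1 \<subseteq> set Hl"
  proof
    fix p assume p: "p \<in> F1"
    then have pp: "prime p" "11 \<le> p" "p \<le> 150" using F(2) unfolding F1_def by auto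
    have "\<not> 2 dvd p" "\<not> 3 dvd p" "\<not> 5 dvd p"
      using pp primes_dvd_imp_eq[of 2 p] primes_dvd_imp_eq[of 3 p] primes_dvd_imp_eq[of 5 p] by auto
    then show "p \<in> set Hl" using Hl_cover pp by blast
  qed
  then have s1: "sum gterm F1 \<le> sum gterm (set Hl)"
    by (intro sum_mono2) (auto simp: gterm_nonneg)
  have "sum gterm F2 \<le> (\<Sum>n\<in>F2. 49 * (8641/40000) * (1 / (real n)^2))"
    by (intro sum_mono gterm_tail) (auto simp: F2_def)
  also have "\<dots> = 49 * (8641/40000) * (\<Sum>n\<in>F2. 1 / (real n)^2)" by (simp add: sum_distrib_left)
  also have "\<dots> \<le> 49 * (8641/40000) * (1/298)"
  proof (intro mult_left_mono odd_sum fin(2))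
    fix n assume "n \<in> F2"
    then have pp: "prime n" "150 < n" using F(2) unfolding F2_def by auto
    then have "\<not> 2 dvd n" using primes_dvd_imp_eq[of 2 n] by auto
    then show "odd n \<and> 150 < n" using pp by simp
  qed simp
  finally have s2: "sum gterm F2 \<le> 49 * (8641/40000) / 298" by simp
  show ?thesis using s s1 s2 Hl_sum unfolding Btot_def by linarith
qed

lemma pow_bound:
  fixes a s r :: real
  assumes "1 \<le> a" "5/2 \<le> r" "0 < s" "s^2 \<le> a"
  shows "a powr (-r) \<le> 1 / (a^2 * s)"
proof -
  have a0: "0 < a" using assms by simp
  have "s \<le> sqrt a" using assms by (simp add: real_le_rsqrt)
  have "a powr (5/2) = a powr (2 + 1/2)" by simp
  also have "\<dots> = a powr 2 * a powr (1/2)" by (rule powr_add)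
  also have "\<dots> = a^2 * sqrt a" using a0 by (simp add: powr_half_sqrt powr_numeral)
  finally have e: "a powr (5/2) = a^2 * sqrt a" .
  have "a powr (-r) \<le> a powr (-(5/2))" using assms by (intro powr_mono) auto
  also have "\<dots> = 1 / (a^2 * sqrt a)" using e a0 by (simp add: powr_minus_divide)
  also have "\<dots> \<le> 1 / (a^2 * s)" using \<open>s \<le> sqrt a\<close> assms(3) a0
    by (intro divide_left_mono mult_left_mono mult_pos_pos) auto
  finally show ?thesis .
qed

lemma fp_le_lin:
  fixes a :: real
  assumes "0 \<le> a" "a \<le> 1/100"
  shows "1 / (1 - a) \<le> 1 + (100/99) * a"
proof -
  have "1 \<le> (1 + (100/99) * a) * (1 - a)"
  proof -
    have "(1 + (100/99) * a) * (1 - a) = 1 + a * (1 - 100 * a) / 99" by (simp add: field_simps)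
    moreover have "0 \<le> a * (1 - 100 * a)" using assms by (intro mult_nonneg_nonneg) auto
    ultimately show ?thesis by simp
  qed
  then show ?thesis using assms by (simp add: pos_divide_le_eq)
qed

lemma Btot_le: "Btot \<le> 9692 / 10000"
  unfolding Btot_def by simp

lemma big_r:
  assumes r: "5/2 \<le> r"
  shows "u_tail 4 r < 1 + 7 powr (-r)"
proof -
  have r1: "r > 1" using r by simp
  define w where "w = (7::real) powr (-r)"
  have w0: "0 < w" unfolding w_def by simp
  have w1: "w \<le> 1/100"
  proof -
    have "w \<le> 1 / (7^2 * (13/5))" unfolding w_def by (rule pow_bound) (use r in \<open>auto simp: power2_eq_square\<close>)
    then show ?thesis by simp
  qed
  define c :: real where "c = 100/99"
  have aa_small: "aa r k \<le> 1/100" if "5 \<le> k" for k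
  proof -
    have "11 \<le> real (nth_prime1 k)" using P_ge11[OF that] by simp
    then have "aa r k \<le> 11 powr (-r)" unfolding aa_def using r by (intro powr_mono2') auto
    also have "\<dots> \<le> 1 / (11^2 * (33/10))" by (rule pow_bound) (use r in \<open>auto simp: power2_eq_square\<close>)
    finally show ?thesis by simp
  qed
  have aa_g: "aa r k \<le> w * gterm (nth_prime1 k)" if "5 \<le> k" for k
  proof -
    let ?P = "real (nth_prime1 k)"
    have P11: "11 \<le> ?P" using P_ge11[OF that] by simp
    have e: "(7 / ?P) powr r = ?P powr (-r) / w" unfolding w_def using P11 ratio_powr[of 7 ?P r] by simp
    have "(7 / ?P) powr r \<le> (7 / ?P) powr (5/2)" using P11 r by (intro powr_mono') auto
    then have "?P powr (-r) / w \<le> gterm (nth_prime1 k)" unfolding gterm_def e .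
    then show ?thesis unfolding aa_def using w0 by (simp add: divide_le_eq mult.commute)
  qed
  have sumb: "(\<Sum>k<n. aa r (5 + k)) \<le> w * Btot" for n
  proof -
    have "(\<Sum>k<n. aa r (5 + k)) \<le> (\<Sum>k<n. w * gterm (nth_prime1 (5 + k)))"
      by (intro sum_mono aa_g) auto
    also have "\<dots> = w * (\<Sum>k<n. gterm (nth_prime1 (5 + k)))" by (simp add: sum_distrib_left)
    also have "(\<Sum>k<n. gterm (nth_prime1 (5 + k))) = sum gterm ((\<lambda>k. nth_prime1 (5 + k)) ` {..<n})"
    proof (subst sum.reindex)
      show "inj_on (\<lambda>k. nth_prime1 (5 + k)) {..<n}"
      proof (rule inj_onI)
        fix a b assume "nth_prime1 (5 + a) = nth_prime1 (5 + b)"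
        then have "5 + a = 5 + b" by (rule P_inj[rotated 2]) auto
        then show "a = b" by simp
      qed
    qed simp
    also have "\<dots> \<le> Btot"
      by (rule prime_sum_bound) (auto simp: P_prime P_ge11)
    finally show ?thesis using w0 by (simp add: mult_left_mono)
  qed
  have prodb: "prod (\<lambda>k. fp r (4 + 1 + k)) {..<n} \<le> exp (c * w * Btot)" for n
  proof -
    have "prod (\<lambda>k. fp r (4 + 1 + k)) {..<n} \<le> (\<Prod>k<n. 1 + c * aa r (5 + k))"
    proof (rule prod_mono)
      fix k assume "k \<in> {..<n}"
      have "fp r (4 + 1 + k) = 1 / (1 - aa r (5 + k))" unfolding fp_def by simp
      also have "\<dots> \<le> 1 + c * aa r (5 + k)" unfolding c_def
        using aa_pos[of r "5+k"] aa_small[of "5+k"] by (intro fp_le_lin) auto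
      finally show "0 \<le> fp r (4 + 1 + k) \<and> fp r (4 + 1 + k) \<le> 1 + c * aa r (5 + k)"
        using fp_nonneg[OF r1] by simp
    qed
    also have "\<dots> \<le> exp (\<Sum>k<n. c * aa r (5 + k))"
      by (rule prod_le_exp_sum) (use less_imp_le[OF aa_pos[of r]] in \<open>auto simp: c_def\<close>)
    also have "(\<Sum>k<n. c * aa r (5 + k)) = c * (\<Sum>k<n. aa r (5 + k))" by (simp add: sum_distrib_left)
    also have "\<dots> \<le> c * (w * Btot)" using sumb[of n] by (simp add: c_def)
    finally show ?thesis by (simp add: mult.assoc)
  qed
  have "u_tail 4 r \<le> exp (c * w * Btot)"
    unfolding u_tail_fp by (rule prodinf_le_const[OF conv_tail[OF r1]]) (rule prodb)
  moreover have "exp (c * w * Btot) < 1 + w"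
  proof -
    define y where "y = c * w * Btot"
    have B0: "0 \<le> Btot" unfolding Btot_def by simp
    have y0: "0 \<le> y" unfolding y_def c_def using w0 B0 by simp
    have cB: "c * Btot \<le> 9792 / 10000" unfolding c_def using Btot_le by simp
    have y1: "y \<le> w * (9792/10000)" unfolding y_def using cB w0 by (simp add: mult.commute mult.left_commute mult_left_mono)
    then have y1': "y \<le> 1" using w1 by simp
    have "exp y \<le> 1 + y + y^2" by (rule exp_bound[OF y0 y1'])
    also have "y^2 \<le> (w * (9792/10000))^2" using y0 y1 by (intro power_mono) auto
    also have "(w * (9792/10000))^2 \<le> w * (1/100)"
    proof -
      have "(w * (9792/10000))^2 \<le> w * w" using w0 by (simp add: power2_eq_square mult_mono)
      also have "\<dots> \<le> w * (1/100)" using w0 w1 by (intro mult_left_mono) auto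
      finally show ?thesis .
    qed
    finally have "exp y \<le> 1 + y + w * (1/100)" by simp
    also have "\<dots> < 1 + w" using y1 w0 by simp
    finally show ?thesis unfolding y_def .
  qed
  ultimately show ?thesis unfolding w_def by simp
qed

lemma scale_sub:
  fixes S :: "real set"
  assumes "0 < s" "\<And>t. \<alpha> \<le> t \<Longrightarrow> t < \<beta> \<Longrightarrow> s * t \<in> S"
  shows "{s * \<alpha> ..< s * \<beta>} \<subseteq> S"
proof
  fix v assume v: "v \<in> {s * \<alpha> ..< s * \<beta>}"
  have "\<alpha> \<le> v / s" "v / s < \<beta>" using v assms(1) by (auto simp: field_simps mult.commute)
  then have "s * (v / s) \<in> S" using assms(2) by blast
  then show "v \<in> S" using assms(1) by simp
qed

lemma closure_sub_union:
  assumes "\<And>n. n \<ge> 1 \<Longrightarrow> sigma_neg r n \<in> \<Union>(set Ks)" "\<And>K. K \<in> set Ks \<Longrightarrow> closed K"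
  shows "sigma_closure r \<subseteq> \<Union>(set Ks)"
  unfolding sigma_closure_def
proof (rule closure_minimal)
  show "sigma_neg r ` {n. n \<ge> 1} \<subseteq> \<Union>(set Ks)" using assms(1) by auto
  show "closed (\<Union>(set Ks))" using assms(2) by (intro closed_Union) auto
qed

lemma alg_K3join:
  fixes y z w U :: real
  assumes "0 < y" "y < 1" "0 \<le> z" "z \<le> y^2 + 2*w" "1 + 2*w \<le> U"
  shows "(1+y)*(1+z) \<le> (1/(1-y)) * U"
proof -
  have "(1+y)*(1+z)*(1-y) = 1 + z - y^2 - y^2*z" by (simp add: algebra_simps power2_eq_square)
  also have "\<dots> \<le> 1 + z - y^2" using assms by simp
  also have "\<dots> \<le> U" using assms by simp
  finally have "(1+y)*(1+z)*(1-y) \<le> U" .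
  then show ?thesis using assms by (simp add: field_simps)
qed

lemma alg_H5a:
  fixes x z w U :: real
  assumes "0 < x" "0 \<le> z" "z < 1" "x^2 \<le> z + 2*w" "1 + 2*w \<le> U" "0 \<le> w"
  shows "(1 + x + x^2) * (1 - z) \<le> (1+x) * U"
proof -
  have "(1 + x + x^2) * (1 - z) = 1 + x + x^2 - z - z*x - z*x^2" by (simp add: algebra_simps power2_eq_square)
  also have "\<dots> \<le> 1 + x + x^2 - z - z*x" using assms by simp
  also have "\<dots> \<le> (1 + x) * (1 + 2*w)"
  proof -
    have "0 \<le> z*x" "0 \<le> w*x" using assms by auto
    then have "x^2 - z - z*x \<le> 2*w + 2*w*x" using assms(4) by (simp add: algebra_simps)
    then show ?thesis by (simp add: algebra_simps)
  qed
  also have "\<dots> \<le> (1+x) * U" using assms by (intro mult_left_mono) auto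
  finally show ?thesis .
qed

lemma alg_H5a':
  fixes x z w U :: real
  assumes "0 < x" "0 \<le> z" "z < 1" "x^2 \<le> z + 2*w" "1 + 2*w \<le> U" "0 \<le> w"
  shows "1 + x + x^2 \<le> (1+x) * (1/(1-z)) * U"
  using alg_H5a[OF assms] assms(3) by (simp add: field_simps)

lemma alg_H5b:
  fixes x z w U :: real
  assumes "0 < x" "x < 1" "0 \<le> z" "z \<le> x^3 + 2*w" "1 + 2*w \<le> U"
  shows "(1 + x + x^2) * (1+z) \<le> (1/(1-x)) * U"
proof -
  have "(1 + x + x^2) * (1+z) * (1-x) = 1 + z - x^3 - x^3*z" by (simp add: algebra_simps power2_eq_square power3_eq_cube)
  also have "\<dots> \<le> 1 + z - x^3" using assms by simp
  also have "\<dots> \<le> U" using assms by simp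
  finally have "(1 + x + x^2) * (1+z) * (1-x) \<le> U" .
  then show ?thesis using assms by (simp add: field_simps)
qed

lemma alg_H5c:
  fixes x y z w U :: real
  assumes "0 < x" "x < 1" "0 \<le> y" "0 \<le> z" "z < 1" "z \<le> y" "y \<le> z + x^2 + 2*w" "1 + 2*w \<le> U"
  shows "(1+x)*(1+y) \<le> (1/(1-x)) * (1/(1-z)) * U"
proof -
  define q where "q = 1 + y - z"
  have q1: "1 \<le> q" unfolding q_def using assms by simp
  have a: "(1+y)*(1-z) \<le> q" unfolding q_def using assms mult_nonneg_nonneg[of y z] by (simp add: algebra_simps)
  have "(1+x)*(1+y)*((1-x)*(1-z)) = (1 - x^2) * ((1+y)*(1-z))" by (simp add: algebra_simps power2_eq_square)
  also have "\<dots> \<le> (1 - x^2) * q" using a assms by (intro mult_left_mono) (auto simp: power2_eq_square mult_le_one)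
  also have "\<dots> = q - x^2 * q" by (simp add: algebra_simps)
  also have "\<dots> \<le> q - x^2" using q1 by (simp add: mult_le_cancel_left1)
  also have "\<dots> \<le> U" unfolding q_def using assms by simp
  finally have "(1+x)*(1+y)*((1-x)*(1-z)) \<le> U" .
  moreover have d: "0 < (1-x)*(1-z)" using assms by simp
  ultimately have "(1+x)*(1+y) \<le> U / ((1-x)*(1-z))" by (simp add: pos_le_divide_eq)
  then show ?thesis by simp
qed

lemma alg_H5d:
  fixes x y z w U :: real
  assumes "0 < x" "0 \<le> z" "z < 1" "0 < y" "y < 1" "x^2 \<le> z + 2*w" "1 + 2*w \<le> U" "0 \<le> w"
  shows "(1 + x + x^2)*(1+y) \<le> (1+x) * ((1/(1-y)) * (1/(1-z)) * U)"
proof -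
  have "(1 + x + x^2)*(1+y)*((1-y)*(1-z)) = (1 + x + x^2) * (1-z) * (1 - y^2)" by (simp add: algebra_simps power2_eq_square)
  also have "\<dots> \<le> (1 + x + x^2) * (1-z)" using assms by (intro mult_left_le) auto
  also have "\<dots> \<le> (1+x) * U" by (rule alg_H5a[of x z w U]) (use assms in auto)
  finally have "(1 + x + x^2)*(1+y)*((1-y)*(1-z)) \<le> (1+x) * U" .
  moreover have d: "0 < (1-y)*(1-z)" using assms by simp
  ultimately have "(1 + x + x^2)*(1+y) \<le> (1+x) * U / ((1-y)*(1-z))" by (simp add: pos_le_divide_eq)
  then show ?thesis by simp
qed

lemma one_plus_le_inv: "0 \<le> x \<Longrightarrow> x < 1 \<Longrightarrow> 1 + x \<le> 1 / (1 - (x::real))"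
  using geo_le[of x 1] geo_1 by simp

lemma mono4:
  fixes a0 a b0 b c0 c d0 d :: real
  assumes "0 \<le> a0" "a0 \<le> a" "0 \<le> b0" "b0 \<le> b" "0 \<le> c0" "c0 \<le> c" "0 \<le> d0" "d0 \<le> d"
  shows "a0 * b0 * c0 * d0 \<le> a * b * c * d"
proof -
  have "a0 * b0 \<le> a * b" using assms by (intro mult_mono) auto
  then have "a0 * b0 * c0 \<le> a * b * c" using assms by (intro mult_mono) auto
  then show ?thesis using assms by (intro mult_mono) auto
qed

definition Ksh :: "real \<Rightarrow> real \<Rightarrow> real \<Rightarrow> real \<Rightarrow> real set list" where
  "Ksh x y z U = [{1..U}, {1+z..(1/(1-z))*U}, {1+y..(1/(1-y))*(1/(1-z))*U}, {1+x..(1+x)*U},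
     {(1+x)*(1+z)..(1/(1-x))*((1/(1-y))*(1/(1-z))*U)}]"

lemma inv_gt: "0 < x \<Longrightarrow> x < 1 \<Longrightarrow> 1 + x < 1 / (1 - (x::real))"
proof -
  assume x: "0 < x" "x < 1"
  have "(1 + x) * (1 - x) < 1" using x by (simp add: algebra_simps)
  then show ?thesis using x by (simp add: field_simps)
qed

lemma setH:
  fixes S :: "real set" and x y z w U :: real
  assumes cl: "closed S"
   and pos: "0 < x" "x < 1" "0 < y" "y < 1" "0 < z" "z < 1" "0 < w"
   and ord: "z \<le> y" "y \<le> x"
   and U: "1 + 2*w \<le> U"
   and g: "x^3 \<le> w" "y^2 \<le> w" "z^2 \<le> w"
   and h1: "z \<le> y^2 + 2*w" and h2: "x^2 \<le> z + 2*w" and h3: "z \<le> x^3 + 2*w"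
   and h4: "y \<le> z + x^2 + 2*w" and h5: "z*(1+x) \<le> x^2"
   and piece: "\<And>a b c t. 1 \<le> t \<Longrightarrow> t < U \<Longrightarrow> geo x a * geo y b * geo z c * t \<in> S"
  shows "\<forall>K \<in> set (Ksh x y z U). K \<subseteq> S \<and> connected K"
    and "\<And>a b c t. 1 \<le> t \<Longrightarrow> t \<le> U \<Longrightarrow> geo x a * geo y b * geo z c * t \<in> \<Union>(set (Ksh x y z U))"
proof -
  define X where "X = 1/(1-x)"
  define Y where "Y = 1/(1-y)"
  define Z where "Z = 1/(1-z)"
  have X1: "1 + x < X" unfolding X_def using inv_gt pos by auto
  have Y1: "1 + y < Y" unfolding Y_def using inv_gt pos by auto
  have Z1: "1 + z < Z" unfolding Z_def using inv_gt pos by auto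
  have U1: "1 < U" using U pos by simp
  have x0: "0 \<le> x" "0 \<le> y" "0 \<le> z" using pos by auto
  have gx: "\<And>a. 1 \<le> geo x a" "\<And>a. geo x a \<le> X" using geo_ge1 geo_le pos unfolding X_def by auto
  have gy: "\<And>a. 1 \<le> geo y a" "\<And>a. geo y a \<le> Y" using geo_ge1 geo_le pos unfolding Y_def by auto
  have gz: "\<And>a. 1 \<le> geo z a" "\<And>a. geo z a \<le> Z" using geo_ge1 geo_le pos unfolding Z_def by auto
  have g0: "\<And>a. 0 \<le> geo x a" "\<And>a. 0 \<le> geo y a" "\<And>a. 0 \<le> geo z a"
    using gx(1) gy(1) gz(1) by (meson order_trans zero_le_one)+
  have limx: "(\<lambda>c. geo x (c + k)) \<longlonglongrightarrow> X" for k unfolding X_def using geo_lim_Suc pos by auto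
  have limy: "(\<lambda>c. geo y (c + k)) \<longlonglongrightarrow> Y" for k unfolding Y_def using geo_lim_Suc pos by auto
  have limz: "(\<lambda>c. geo z (c + k)) \<longlonglongrightarrow> Z" for k unfolding Z_def using geo_lim_Suc pos by auto
  have z2U: "1 + z^2 \<le> U" using g U pos by simp
  have y2U: "1 + y^2 \<le> U" using g U pos by simp
  have x3U: "1 + x^3 \<le> U" using g U pos by simp
  define M where "M a b = {v. geo x a * geo y b * v \<in> S}" for a b
  define N where "N a = {v. geo x a * v \<in> S}" for a
  have K1sub: "{1..<U} \<subseteq> M a b" for a b
    using piece[of _ a b 0] unfolding M_def by auto
  have K2sub: "{1+z..<Z*U} \<subseteq> M a b" for a b
  proof -
    have "{geo z (Suc 0) * 1 ..< Z * U} \<subseteq> M a b"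
    proof (rule chain[of "\<lambda>c. geo z (Suc c)"])
      show "0 < geo z (Suc c)" for c using gz(1)[of "Suc c"] by simp
      show "(\<lambda>c. geo z (Suc c)) \<longlonglongrightarrow> Z" using limz[of 1] by simp
      show "geo z (Suc (Suc c)) * 1 \<le> geo z (Suc c) * U" for c
      proof -
        have "geo z (Suc (Suc c)) \<le> geo z (Suc c) * (1 + z^2)" by (rule geo_ratio_k) (use pos in auto)
        also have "\<dots> \<le> geo z (Suc c) * U" using z2U gz(1)[of "Suc c"] by (intro mult_left_mono) auto
        finally show ?thesis by simp
      qed
      show "geo z (Suc c) * t \<in> M a b" if "1 \<le> t" "t < U" for c t
        using piece[OF that, of a b "Suc c"] unfolding M_def by (simp add: mult.assoc)
    qed simp
    then show ?thesis using geo_1[of z] by simp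
  qed
  have K3a: "{1+y..<Y*U} \<subseteq> N a" for a
  proof -
    have "{geo y (Suc 0) * 1 ..< Y * U} \<subseteq> N a"
    proof (rule chain[of "\<lambda>c. geo y (Suc c)"])
      show "0 < geo y (Suc c)" for c using gy(1)[of "Suc c"] by simp
      show "(\<lambda>c. geo y (Suc c)) \<longlonglongrightarrow> Y" using limy[of 1] by simp
      show "geo y (Suc (Suc c)) * 1 \<le> geo y (Suc c) * U" for c
      proof -
        have "geo y (Suc (Suc c)) \<le> geo y (Suc c) * (1 + y^2)" by (rule geo_ratio_k) (use pos in auto)
        also have "\<dots> \<le> geo y (Suc c) * U" using y2U gy(1)[of "Suc c"] by (intro mult_left_mono) auto
        finally show ?thesis by simp
      qed
      show "geo y (Suc c) * t \<in> N a" if "1 \<le> t" "t < U" for c t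
        using K1sub[of a "Suc c"] that unfolding M_def N_def by (auto simp: mult.assoc)
    qed simp
    then show ?thesis using geo_1[of y] by simp
  qed
  have K3b: "{(1+y)*(1+z)..<Y*(Z*U)} \<subseteq> N a" for a
  proof -
    have "{geo y (Suc 0) * (1+z) ..< Y * (Z*U)} \<subseteq> N a"
    proof (rule chain[of "\<lambda>c. geo y (Suc c)"])
      show "0 < geo y (Suc c)" for c using gy(1)[of "Suc c"] by simp
      show "(\<lambda>c. geo y (Suc c)) \<longlonglongrightarrow> Y" using limy[of 1] by simp
      show "geo y (Suc (Suc c)) * (1+z) \<le> geo y (Suc c) * (Z*U)" for c
      proof -
        have "geo y (Suc (Suc c)) \<le> geo y (Suc c) * (1 + y^2)" by (rule geo_ratio_k) (use pos in auto)
        also have "\<dots> \<le> geo y (Suc c) * U" using y2U gy(1)[of "Suc c"] by (intro mult_left_mono) auto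
        finally have "geo y (Suc (Suc c)) * (1+z) \<le> geo y (Suc c) * U * (1+z)" using pos by (intro mult_right_mono) auto
        also have "\<dots> \<le> geo y (Suc c) * U * Z" using Z1 U1 gy(1)[of "Suc c"] by (intro mult_left_mono) auto
        finally show ?thesis by (simp add: mult.assoc mult.commute mult.left_commute)
      qed
      show "geo y (Suc c) * t \<in> N a" if "1+z \<le> t" "t < Z*U" for c t
        using K2sub[of a "Suc c"] that unfolding M_def N_def by (auto simp: mult.assoc)
    qed (use pos in simp)
    then show ?thesis using geo_1[of y] by simp
  qed
  have join3: "(1+y)*(1+z) \<le> Y * U" unfolding Y_def by (rule alg_K3join[of y z w U]) (use pos h1 U in auto)
  have K3: "{1+y..<Y*(Z*U)} \<subseteq> N a" for a
  proof
    fix t assume t: "t \<in> {1+y..<Y*(Z*U)}"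
    show "t \<in> N a"
    proof (cases "t < Y*U")
      case True then show ?thesis using K3a[of a] t by auto
    next
      case False then show ?thesis using K3b[of a] t join3 by auto
    qed
  qed
  have geo2: "geo x 2 = 1 + x + x^2" by (rule geo_2)
  have pA: "{(1+x)*(1+z)..<(1+x)*(Z*U)} \<subseteq> S"
  proof (rule scale_sub)
    show "0 < 1 + x" using pos by simp
    show "(1+x) * t \<in> S" if "1+z \<le> t" "t < Z*U" for t
      using K2sub[of 1 0] that geo_1[of x] unfolding M_def by auto
  qed
  have pB: "{(1+x)*(1+y)..<(1+x)*(Y*(Z*U))} \<subseteq> S"
  proof (rule scale_sub)
    show "0 < 1 + x" using pos by simp
    show "(1+x) * t \<in> S" if "1+y \<le> t" "t < Y*(Z*U)" for t
      using K3[of 1] that geo_1[of x] unfolding N_def by auto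
  qed
  have stepx: "geo x (Suc (Suc (Suc c))) \<le> geo x (Suc (Suc c)) * U" for c
  proof -
    have "geo x (Suc (Suc (Suc c))) \<le> geo x (Suc (Suc c)) * (1 + x^3)" by (rule geo_ratio_k) (use pos in auto)
    also have "\<dots> \<le> geo x (Suc (Suc c)) * U" using x3U gx(1)[of "Suc (Suc c)"] by (intro mult_left_mono) auto
    finally show ?thesis .
  qed
  have limx2: "(\<lambda>c. geo x (Suc (Suc c))) \<longlonglongrightarrow> X" using limx[of 2] by simp
  have pC: "{geo x 2 * 1 ..< X * U} \<subseteq> S"
  proof -
    have "{geo x (Suc (Suc 0)) * 1 ..< X * U} \<subseteq> S"
    proof (rule chain[of "\<lambda>c. geo x (Suc (Suc c))"])
      show "0 < geo x (Suc (Suc c))" for c using gx(1)[of "Suc (Suc c)"] by simp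
      show "geo x (Suc (Suc (Suc c))) * 1 \<le> geo x (Suc (Suc c)) * U" for c using stepx[of c] by simp
      show "geo x (Suc (Suc c)) * t \<in> S" if "1 \<le> t" "t < U" for c t
        using piece[OF that, of "Suc (Suc c)" 0 0] by simp
    qed (use limx2 in auto)
    then show ?thesis by (simp add: numeral_2_eq_2)
  qed
  have pD: "{geo x 2 * (1+z) ..< X * (Z*U)} \<subseteq> S"
  proof -
    have "{geo x (Suc (Suc 0)) * (1+z) ..< X * (Z*U)} \<subseteq> S"
    proof (rule chain[of "\<lambda>c. geo x (Suc (Suc c))"])
      show "0 < geo x (Suc (Suc c))" for c using gx(1)[of "Suc (Suc c)"] by simp
      show "geo x (Suc (Suc (Suc c))) * (1+z) \<le> geo x (Suc (Suc c)) * (Z*U)" for c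
      proof -
        have "geo x (Suc (Suc (Suc c))) * (1+z) \<le> geo x (Suc (Suc c)) * U * (1+z)"
          using stepx[of c] pos by (intro mult_right_mono) auto
        also have "\<dots> \<le> geo x (Suc (Suc c)) * U * Z" using Z1 U1 gx(1)[of "Suc (Suc c)"] by (intro mult_left_mono) auto
        finally show ?thesis by (simp add: mult.assoc mult.commute mult.left_commute)
      qed
      show "geo x (Suc (Suc c)) * t \<in> S" if "1+z \<le> t" "t < Z*U" for c t
        using K2sub[of "Suc (Suc c)" 0] that unfolding M_def by auto
    qed (use limx2 pos in auto)
    then show ?thesis by (simp add: numeral_2_eq_2)
  qed
  have pE: "{geo x 2 * (1+y) ..< X * (Y*(Z*U))} \<subseteq> S"
  proof -
    have "{geo x (Suc (Suc 0)) * (1+y) ..< X * (Y*(Z*U))} \<subseteq> S"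
    proof (rule chain[of "\<lambda>c. geo x (Suc (Suc c))"])
      show "0 < geo x (Suc (Suc c))" for c using gx(1)[of "Suc (Suc c)"] by simp
      show "geo x (Suc (Suc (Suc c))) * (1+y) \<le> geo x (Suc (Suc c)) * (Y*(Z*U))" for c
      proof -
        have "geo x (Suc (Suc (Suc c))) * (1+y) \<le> geo x (Suc (Suc c)) * U * (1+y)"
          using stepx[of c] pos by (intro mult_right_mono) auto
        also have "\<dots> \<le> geo x (Suc (Suc c)) * U * (Y*Z)"
        proof -
          have "1 + y \<le> Y * 1" using Y1 by simp
          also have "\<dots> \<le> Y * Z" using Y1 Z1 pos by (intro mult_left_mono) auto
          finally have "1 + y \<le> Y * Z" .
          then show ?thesis using U1 gx(1)[of "Suc (Suc c)"] by (intro mult_left_mono) auto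
        qed
        finally show ?thesis by (simp add: mult.assoc mult.commute mult.left_commute)
      qed
      show "geo x (Suc (Suc c)) * t \<in> S" if "1+y \<le> t" "t < Y*(Z*U)" for c t
        using K3[of "Suc (Suc c)"] that unfolding N_def by auto
    qed (use limx2 pos in auto)
    then show ?thesis by (simp add: numeral_2_eq_2)
  qed
  have H5a: "geo x 2 \<le> (1+x) * (Z*U)"
    unfolding geo2 Z_def using alg_H5a'[of x z w U] pos h2 U by (simp add: mult.assoc)
  have H5b: "geo x 2 * (1+z) \<le> X * U"
    unfolding geo2 X_def by (rule alg_H5b[of x z w U]) (use pos h3 U in auto)
  have H5c: "(1+x)*(1+y) \<le> X * (Z*U)"
    unfolding X_def Z_def using alg_H5c[of x y z w U] pos ord h4 U by (simp add: mult.assoc)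
  have H5d: "geo x 2 * (1+y) \<le> (1+x) * (Y*(Z*U))"
    unfolding geo2 Y_def Z_def using alg_H5d[of x z y w U] pos h2 U by (simp add: mult.assoc)
  have K5: "{(1+x)*(1+z)..<X*(Y*(Z*U))} \<subseteq> S"
  proof
    fix t assume t: "t \<in> {(1+x)*(1+z)..<X*(Y*(Z*U))}"
    show "t \<in> S"
    proof (cases "t < (1+x)*(Z*U)")
      case True then show ?thesis using pA t by auto
    next
      case c1: False
      show ?thesis
      proof (cases "t < X*U")
        case True then show ?thesis using pC c1 H5a by auto
      next
        case c2: False
        show ?thesis
        proof (cases "t < X*(Z*U)")
          case True then show ?thesis using pD c2 H5b by auto
        next
          case c3: False
          show ?thesis
          proof (cases "t < (1+x)*(Y*(Z*U))")
            case True then show ?thesis using pB c3 H5c by auto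
          next
            case c4: False
            then show ?thesis using pE t H5d by auto
          qed
        qed
      qed
    qed
  qed
  have I1: "{1..U} \<subseteq> S"
    by (rule closed_extend[OF cl U1]) (use K1sub[of 0 0] in \<open>auto simp: M_def\<close>)
  have I2: "{1+z..Z*U} \<subseteq> S"
  proof (rule closed_extend[OF cl])
    have "1 + z < Z * 1" using Z1 by simp
    also have "\<dots> \<le> Z * U" using Z1 U1 pos by (intro mult_left_mono) auto
    finally show "1 + z < Z * U" .
    show "{1+z..<Z*U} \<subseteq> S" using K2sub[of 0 0] by (auto simp: M_def)
  qed
  have I3: "{1+y..Y*(Z*U)} \<subseteq> S"
  proof (rule closed_extend[OF cl])
    have "1 + y < Y * 1" using Y1 by simp
    also have "\<dots> \<le> Y * (Z * U)"
    proof -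
      have "1 * 1 \<le> Z * U" using Z1 U1 pos by (intro mult_mono) auto
      then show ?thesis using Y1 pos by (intro mult_left_mono) auto
    qed
    finally show "1 + y < Y * (Z * U)" .
    show "{1+y..<Y*(Z*U)} \<subseteq> S" using K3[of 0] by (auto simp: N_def)
  qed
  have I4: "{1+x..(1+x)*U} \<subseteq> S"
  proof (rule closed_extend[OF cl])
    show "1 + x < (1+x) * U" using U1 pos by simp
    show "{1+x..<(1+x)*U} \<subseteq> S"
    proof (rule order_trans[OF _ scale_sub[of "1+x" 1 U S, simplified]])
      show "\<And>t. 1 \<le> t \<Longrightarrow> t < U \<Longrightarrow> (1 + x) * t \<in> S" using piece[of _ 1 0 0] geo_1[of x] by simp
    qed (use pos in auto)
  qed
  have I5: "{(1+x)*(1+z)..X*(Y*(Z*U))} \<subseteq> S"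
  proof (rule closed_extend[OF cl])
    have "(1+x)*(1+z) < X * Z" using X1 Z1 pos by (intro mult_strict_mono) auto
    also have "\<dots> \<le> X * (Y * (Z * U))"
    proof -
      have "1 * 1 \<le> Y * U" using Y1 U1 pos by (intro mult_mono) auto
      then have "1 \<le> Y * U" by simp
      then have "Z \<le> Z * (Y * U)" using Z1 pos by (simp add: mult_le_cancel_left1)
      then show ?thesis using X1 pos by (intro mult_left_mono) (auto simp: mult.commute mult.left_commute)
    qed
    finally show "(1+x)*(1+z) < X * (Y * (Z * U))" .
    show "{(1+x)*(1+z)..<X*(Y*(Z*U))} \<subseteq> S" by (rule K5)
  qed
  show "\<forall>K \<in> set (Ksh x y z U). K \<subseteq> S \<and> connected K"
    unfolding Ksh_def using I1 I2 I3 I4 I5 unfolding X_def Y_def Z_def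
    by (auto simp: is_interval_connected mult.assoc)
  fix a b c t assume t: "1 \<le> t" "t \<le> U"
  let ?v = "geo x a * geo y b * geo z c * t"
  have up: "?v \<le> X * Y * Z * U" by (rule mono4) (use g0 gx gy gz t in auto)
  have gz1: "c > 0 \<Longrightarrow> 1 + z \<le> geo z c" using geo_mono[of z 1 c] geo_1[of z] pos by simp
  have gy1: "b > 0 \<Longrightarrow> 1 + y \<le> geo y b" using geo_mono[of y 1 b] geo_1[of y] pos by simp
  have gx1: "a > 0 \<Longrightarrow> 1 + x \<le> geo x a" using geo_mono[of x 1 a] geo_1[of x] pos by simp
  have gx2: "a \<ge> 2 \<Longrightarrow> geo x 2 \<le> geo x a" using geo_mono[of x 2 a] pos by simp
  have "?v \<in> {1..U} \<or> ?v \<in> {1+z..Z*U} \<or> ?v \<in> {1+y..Y*(Z*U)} \<or> ?v \<in> {1+x..(1+x)*U}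
        \<or> ?v \<in> {(1+x)*(1+z)..X*(Y*(Z*U))}"
  proof (cases "a = 0")
    case a0: True
    show ?thesis
    proof (cases "b = 0")
      case b0: True
      show ?thesis
      proof (cases "c = 0")
        case True then show ?thesis using a0 b0 t by simp
      next
        case False
        have "1 * 1 * (1 + z) * 1 \<le> ?v" by (rule mono4) (use g0 gx gy gz1 False t pos in auto)
        moreover have "?v \<le> 1 * 1 * Z * U" by (rule mono4) (use g0 gz t a0 b0 in auto)
        ultimately show ?thesis by (simp add: mult.assoc)
      qed
    next
      case False
      have "1 * (1 + y) * 1 * 1 \<le> ?v" by (rule mono4) (use g0 gx gy1 gz False t pos in auto)
      moreover have "?v \<le> 1 * Y * Z * U" by (rule mono4) (use g0 gy gz t a0 in auto)
      ultimately show ?thesis by (simp add: mult.assoc)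
    qed
  next
    case a0: False
    show ?thesis
    proof (cases "a = 1")
      case a1: True
      show ?thesis
      proof (cases "b = 0 \<and> c = 0")
        case True then show ?thesis using a1 t geo_1[of x] pos by simp
      next
        case False
        have bc: "1 + z \<le> geo y b * geo z c"
        proof (cases "b = 0")
          case True
          then have "c > 0" using False by simp
          then show ?thesis using gz1 True by simp
        next
          case b: False
          have "1 + z \<le> 1 + y" using ord by simp
          also have "\<dots> \<le> geo y b * 1" using gy1 b by simp
          also have "\<dots> \<le> geo y b * geo z c" using gz(1)[of c] gy(1)[of b] by (intro mult_left_mono) auto
          finally show ?thesis .
        qed
        have "(1 + x) * 1 * (1 + z) * 1 \<le> geo x a * 1 * (geo y b * geo z c) * t"
          by (rule mono4) (use g0 gx1 a0 bc t pos in auto)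
        then have "(1 + x) * (1 + z) \<le> ?v" by (simp add: mult.assoc)
        moreover have "?v \<le> X * (Y * (Z * U))" using up by (simp add: mult.assoc)
        ultimately show ?thesis by simp
      qed
    next
      case False
      then have a2: "a \<ge> 2" using a0 by simp
      have "(1+x)*(1+z) \<le> geo x 2" using h5 unfolding geo2 by (simp add: algebra_simps power2_eq_square)
      also have "\<dots> \<le> geo x a * 1 * 1 * 1" using gx2 a2 by simp
      also have "\<dots> \<le> ?v" by (rule mono4) (use g0 gx gy gz t in auto)
      finally have "(1 + x) * (1 + z) \<le> ?v" .
      moreover have "?v \<le> X * (Y * (Z * U))" using up by (simp add: mult.assoc)
      ultimately show ?thesis by simp
    qed
  qed
  then show "?v \<in> \<Union>(set (Ksh x y z U))"
    unfolding Ksh_def X_def Y_def Z_def by (auto simp: mult.assoc)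
qed

definition Ksl :: "real \<Rightarrow> real \<Rightarrow> real \<Rightarrow> real \<Rightarrow> real set list" where
  "Ksl x y z U = [{1..(1/(1-x))*((1/(1-y))*((1/(1-z))*U))}]"

lemma setL:
  fixes S :: "real set" and x y z w U :: real
  assumes cl: "closed S"
   and pos: "0 < x" "x < 1" "0 < y" "y < 1" "0 < z" "z < 1" "0 < w"
   and U: "1 + 2*w \<le> U"
   and l1: "z \<le> 2*w" and l2: "y \<le> z + 2*w" and l3: "x \<le> y + z + 2*w"
   and piece: "\<And>a b c t. 1 \<le> t \<Longrightarrow> t < U \<Longrightarrow> geo x a * geo y b * geo z c * t \<in> S"
  shows "\<forall>K \<in> set (Ksl x y z U). K \<subseteq> S \<and> connected K"
    and "\<And>a b c t. 1 \<le> t \<Longrightarrow> t \<le> U \<Longrightarrow> geo x a * geo y b * geo z c * t \<in> \<Union>(set (Ksl x y z U))"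
proof -
  define X where "X = 1/(1-x)"
  define Y where "Y = 1/(1-y)"
  define Z where "Z = 1/(1-z)"
  have X1: "1 + x \<le> X" unfolding X_def using one_plus_le_inv pos by auto
  have Y1: "1 + y \<le> Y" unfolding Y_def using one_plus_le_inv pos by auto
  have Z1: "1 + z \<le> Z" unfolding Z_def using one_plus_le_inv pos by auto
  have U1: "1 < U" using U pos by simp
  have gx: "\<And>a. 1 \<le> geo x a" "\<And>a. geo x a \<le> X" using geo_ge1 geo_le pos unfolding X_def by auto
  have gy: "\<And>a. 1 \<le> geo y a" "\<And>a. geo y a \<le> Y" using geo_ge1 geo_le pos unfolding Y_def by auto
  have gz: "\<And>a. 1 \<le> geo z a" "\<And>a. geo z a \<le> Z" using geo_ge1 geo_le pos unfolding Z_def by auto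
  have g0: "\<And>a. 0 \<le> geo x a" "\<And>a. 0 \<le> geo y a" "\<And>a. 0 \<le> geo z a"
    using gx(1) gy(1) gz(1) by (meson order_trans zero_le_one)+
  have limx: "(\<lambda>c. geo x c) \<longlonglongrightarrow> X" unfolding X_def using geo_lim pos by auto
  have limy: "(\<lambda>c. geo y c) \<longlonglongrightarrow> Y" unfolding Y_def using geo_lim pos by auto
  have limz: "(\<lambda>c. geo z c) \<longlonglongrightarrow> Z" unfolding Z_def using geo_lim pos by auto
  have zU: "1 + z \<le> U" using l1 U by simp
  have ZU1: "1 \<le> Z * U" using Z1 U1 pos mult_mono[of 1 Z 1 U] by simp
  have yZU: "1 + y \<le> Z * U"
  proof -
    have "0 \<le> w * z" using pos by simp
    moreover have "(1 + z) * (1 + 2*w) = 1 + z + 2*w + 2*(w*z)" by (simp add: algebra_simps)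
    ultimately have "1 + y \<le> (1 + z) * (1 + 2*w)" using l2 by linarith
    also have "\<dots> \<le> Z * U" using Z1 U pos by (intro mult_mono) auto
    finally show ?thesis .
  qed
  have xYZU: "1 + x \<le> Y * (Z * U)"
  proof -
    have nn: "0 \<le> y*z" "0 \<le> y*w" "0 \<le> z*w" "0 \<le> y*z*w" using pos by auto
    have "(1 + y) * ((1 + z) * (1 + 2*w)) = 1 + y + z + 2*w + y*z + 2*(y*w) + 2*(z*w) + 2*(y*z*w)"
      by (simp add: algebra_simps)
    then have "1 + x \<le> (1 + y) * ((1 + z) * (1 + 2*w))" using l3 nn by linarith
    also have "\<dots> \<le> Y * (Z * U)" using Y1 Z1 U pos by (intro mult_mono) auto
    finally show ?thesis .
  qed
  define M where "M a b = {v. geo x a * geo y b * v \<in> S}" for a b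
  define N where "N a = {v. geo x a * v \<in> S}" for a
  have L1: "{1..<Z*U} \<subseteq> M a b" for a b
  proof -
    have "{geo z 0 * 1 ..< Z * U} \<subseteq> M a b"
    proof (rule chain[of "\<lambda>c. geo z c"])
      show "0 < geo z c" for c using gz(1)[of c] by simp
      show "geo z (Suc c) * 1 \<le> geo z c * U" for c
      proof -
        have "geo z (Suc c) \<le> geo z c * (1 + z)" by (rule geo_ratio1) (use pos in auto)
        also have "\<dots> \<le> geo z c * U" using zU g0 by (intro mult_left_mono) auto
        finally show ?thesis by simp
      qed
      show "geo z c * t \<in> M a b" if "1 \<le> t" "t < U" for c t
        using piece[OF that, of a b c] unfolding M_def by (simp add: mult.assoc)
    qed (use limz in auto)
    then show ?thesis by simp
  qed
  have L2: "{1..<Y*(Z*U)} \<subseteq> N a" for a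
  proof -
    have "{geo y 0 * 1 ..< Y * (Z * U)} \<subseteq> N a"
    proof (rule chain[of "\<lambda>c. geo y c"])
      show "0 < geo y c" for c using gy(1)[of c] by simp
      show "geo y (Suc c) * 1 \<le> geo y c * (Z * U)" for c
      proof -
        have "geo y (Suc c) \<le> geo y c * (1 + y)" by (rule geo_ratio1) (use pos in auto)
        also have "\<dots> \<le> geo y c * (Z * U)" using yZU g0 by (intro mult_left_mono) auto
        finally show ?thesis by simp
      qed
      show "geo y c * t \<in> N a" if "1 \<le> t" "t < Z * U" for c t
        using L1[of a c] that unfolding M_def N_def by (auto simp: mult.assoc)
    qed (use limy in auto)
    then show ?thesis by simp
  qed
  have L3: "{1..<X*(Y*(Z*U))} \<subseteq> S"
  proof -
    have "{geo x 0 * 1 ..< X * (Y * (Z * U))} \<subseteq> S"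
    proof (rule chain[of "\<lambda>c. geo x c"])
      show "0 < geo x c" for c using gx(1)[of c] by simp
      show "geo x (Suc c) * 1 \<le> geo x c * (Y * (Z * U))" for c
      proof -
        have "geo x (Suc c) \<le> geo x c * (1 + x)" by (rule geo_ratio1) (use pos in auto)
        also have "\<dots> \<le> geo x c * (Y * (Z * U))" using xYZU g0 by (intro mult_left_mono) auto
        finally show ?thesis by simp
      qed
      show "geo x c * t \<in> S" if "1 \<le> t" "t < Y * (Z * U)" for c t
        using L2[of c] that unfolding N_def by auto
    qed (use limx in auto)
    then show ?thesis by simp
  qed
  have big: "1 < X * (Y * (Z * U))"
  proof -
    have "1 * 1 \<le> Y * (Z * U)" using Y1 ZU1 pos by (intro mult_mono) auto
    then have "1 * 1 < X * (Y * (Z * U))" using X1 pos by (intro mult_less_le_imp_less) auto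
    then show ?thesis by simp
  qed
  have I: "{1..X*(Y*(Z*U))} \<subseteq> S" by (rule closed_extend[OF cl big L3])
  show "\<forall>K \<in> set (Ksl x y z U). K \<subseteq> S \<and> connected K"
    unfolding Ksl_def using I unfolding X_def Y_def Z_def by (auto simp: is_interval_connected)
  fix a b c t assume t: "1 \<le> t" "t \<le> U"
  let ?v = "geo x a * geo y b * geo z c * t"
  have up: "?v \<le> X * Y * Z * U" by (rule mono4) (use g0 gx gy gz t in auto)
  have lo: "1 * 1 * 1 * 1 \<le> ?v" by (rule mono4) (use g0 gx gy gz t in auto)
  show "?v \<in> \<Union>(set (Ksl x y z U))"
    unfolding Ksl_def using up lo unfolding X_def Y_def Z_def by (auto simp: mult.assoc)
qed

theorem mainTheorem10:
  fixes r :: real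
  assumes "r > 1"
    and "\<forall>m > 3. \<not> mighty r m"
  shows "finite (components (sigma_closure r)) \<and> card (components (sigma_closure r)) \<le> 5"
proof -
  note r1 = assms(1) and nm = assms(2)
  define x where "x = (2::real) powr (-r)"
  define y where "y = (3::real) powr (-r)"
  define z where "z = (5::real) powr (-r)"
  define w where "w = (7::real) powr (-r)"
  define U where "U = u_tail 3 r"
  define S where "S = sigma_closure r"
  have cl: "closed S" unfolding S_def sigma_closure_def by simp
  have xh: "x < 1/2" unfolding x_def using x_half[OF r1] .
  have yx: "y \<le> x" unfolding x_def y_def using g_yx[OF r1] .
  have zy: "z \<le> y" unfolding z_def y_def using g_zy[OF r1] .
  have wz: "w \<le> z" unfolding z_def w_def using g_wz[OF r1] .
  have pos: "0 < x" "x < 1" "0 < y" "y < 1" "0 < z" "z < 1" "0 < w"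
    using xh yx zy wz unfolding x_def y_def z_def w_def by auto
  have aa4: "aa r 4 = w" unfolding aa_def w_def using P4 by simp
  have r52: "r < 5/2"
  proof (rule ccontr)
    assume "\<not> r < 5/2"
    then have "u_tail 4 r < 1 + 7 powr (-r)" using big_r by simp
    moreover have "1 + aa r 4 \<le> u_tail 4 r" using nonmighty_le[OF nm, of 4] by simp
    ultimately show False using aa4 unfolding w_def by simp
  qed
  have U2w: "1 + 2*w \<le> U"
  proof -
    have "U = fp r 4 * u_tail 4 r" unfolding U_def using u_split[OF r1, of 3] by simp
    moreover have "fp r 4 = 1 / (1 - w)" unfolding fp_def aa4 ..
    moreover have "1 + w \<le> u_tail 4 r" using nonmighty_le[OF nm, of 4] aa4 by simp
    moreover have "(1 + w) / (1 - w) \<le> u_tail 4 r / (1 - w)"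
      using \<open>1 + w \<le> u_tail 4 r\<close> pos wz by (intro divide_right_mono) auto
    ultimately have "(1 + w) / (1 - w) \<le> U" by simp
    moreover have "1 + 2*w \<le> (1 + w) / (1 - w)"
    proof -
      have "(1 + 2*w) * (1 - w) \<le> 1 + w" using pos by (simp add: algebra_simps)
      then show ?thesis using pos wz by (simp add: pos_le_divide_eq)
    qed
    ultimately show ?thesis by simp
  qed
  have spx: "sp r 2 a = geo x a" for a unfolding sp_geo x_def by simp
  have spy: "sp r 3 a = geo y a" for a unfolding sp_geo y_def by simp
  have spz: "sp r 5 a = geo z a" for a unfolding sp_geo z_def by simp
  have piece: "geo x a * geo y b * geo z c * t \<in> S" if "1 \<le> t" "t < U" for a b c t
    using piece_in_T[OF r1 nm, of t a b c] that unfolding S_def U_def spx spy spz by simp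
  have cover: "\<exists>a b c t. sigma_neg r n = geo x a * geo y b * geo z c * t \<and> 1 \<le> t \<and> t \<le> U" if "n \<ge> 1" for n
    using sigma_decomp[OF r1 that] unfolding U_def spx spy spz by blast
  have final: "finite (components S) \<and> card (components S) \<le> 5"
    if Ks: "\<forall>K \<in> set Ks. K \<subseteq> S \<and> connected K"
       "\<And>a b c t. 1 \<le> t \<Longrightarrow> t \<le> U \<Longrightarrow> geo x a * geo y b * geo z c * t \<in> \<Union>(set Ks)"
       "\<And>K. K \<in> set Ks \<Longrightarrow> closed K" "length Ks \<le> 5" for Ks
  proof -
    have "S \<subseteq> \<Union>(set Ks)" unfolding S_def
    proof (rule closure_sub_union)
      fix n :: nat assume "n \<ge> 1"
      then obtain a b c t where "sigma_neg r n = geo x a * geo y b * geo z c * t" "1 \<le> t" "t \<le> U"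
        using cover by blast
      then show "sigma_neg r n \<in> \<Union>(set Ks)" using Ks(2) by simp
    qed (use Ks(3) in auto)
    then have "finite (components S) \<and> card (components S) \<le> length Ks"
      using Ks(1) by (intro comps_bound) auto
    then show ?thesis using Ks(4) by simp
  qed
  show ?thesis
  proof (cases "r \<le> 3/2")
    case True
    have l1: "z \<le> 2*w" unfolding z_def w_def using l1[OF r1 True] .
    have l2: "y \<le> z + 2*w" unfolding z_def w_def y_def using l2[OF r1 True] .
    have l3: "x \<le> y + z + 2*w" unfolding x_def z_def w_def y_def using l3[OF r1 True] .
    have "finite (components S) \<and> card (components S) \<le> 5"
    proof (rule final[of "Ksl x y z U"])
      show "\<forall>K \<in> set (Ksl x y z U). K \<subseteq> S \<and> connected K"
        by (rule setL(1)[OF cl pos U2w l1 l2 l3 piece])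
      show "geo x a * geo y b * geo z c * t \<in> \<Union>(set (Ksl x y z U))" if "1 \<le> t" "t \<le> U" for a b c t
        by (rule setL(2)[OF cl pos U2w l1 l2 l3 piece that])
      show "closed K" if "K \<in> set (Ksl x y z U)" for K using that unfolding Ksl_def by auto
      show "length (Ksl x y z U) \<le> 5" unfolding Ksl_def by simp
    qed
    then show ?thesis unfolding S_def .
  next
    case False
    then have r32: "3/2 \<le> r" by simp
    have r52': "r \<le> 5/2" using r52 by simp
    have g: "x^3 \<le> w" "y^2 \<le> w" "z^2 \<le> w"
      unfolding x_def y_def z_def w_def using g_x3[OF r1] g_y2[OF r1] g_z2[OF r1] by auto
    have h1: "z \<le> y^2 + 2*w" unfolding z_def w_def y_def using h1[OF r1 r52'] .
    have h2: "x^2 \<le> z + 2*w" unfolding x_def z_def w_def using h2[OF r1 r52'] .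
    have h3: "z \<le> x^3 + 2*w" unfolding x_def z_def w_def using h3[OF r1 r52'] .
    have h4: "y \<le> z + x^2 + 2*w" unfolding x_def z_def w_def y_def using h4[OF r1 r52'] .
    have h5: "z*(1+x) \<le> x^2" unfolding x_def z_def using h5[OF r1 r32] .
    have "finite (components S) \<and> card (components S) \<le> 5"
    proof (rule final[of "Ksh x y z U"])
      show "\<forall>K \<in> set (Ksh x y z U). K \<subseteq> S \<and> connected K"
        by (rule setH(1)[OF cl pos zy yx U2w g h1 h2 h3 h4 h5 piece])
      show "geo x a * geo y b * geo z c * t \<in> \<Union>(set (Ksh x y z U))" if "1 \<le> t" "t \<le> U" for a b c t
        by (rule setH(2)[OF cl pos zy yx U2w g h1 h2 h3 h4 h5 piece that])
      show "closed K" if "K \<in> set (Ksh x y z U)" for K using that unfolding Ksh_def by auto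
      show "length (Ksh x y z U) \<le> 5" unfolding Ksh_def by simp
    qed
    then show ?thesis unfolding S_def .
  qed
qed

end
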